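(* Let $P=\Bbbk[x_1,x_2,x_3]$ with Poisson bracket $\{x_1,x_2\}=0$, $\{x_2,x_3\}=2x_1x_2+x_2^2$, $\{x_3,x_1\}=x_1^2+2x_1x_2$. If $G$ is a nontrivial finite subgroup of $\mathrm{PAut}_{\mathrm{gr}}(P)$ generated by Poisson reflections, then $P^G$ is not isomorphic to $P$ as Poisson algebras.
   Context: $\Bbbk$ is algebraically closed of characteristic $0$; $P$ has the standard grading. $\mathrm{PAut}_{\mathrm{gr}}(P)$ is the group of degree-preserving bijective algebra homomorphisms preserving the bracket. A Poisson reflection is a finite-order $\phi\in\mathrm{PAut}_{\mathrm{gr}}(P)$ such that $\phi|_{P_1}$ has eigenvalues $1,1,\xi$ with $\xi\neq1$ a primitive root of unity. $P^G$ is the subalgebra of $G$-invariants with the restricted bracket. *)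

theory Defs
  imports "HOL-Library.Poly_Mapping" "Jordan_Normal_Form.Char_Poly"
begin

datatype var = X1 | X2 | X3

type_synonym 'k mpoly = "(var \<Rightarrow>\<^sub>0 nat) \<Rightarrow>\<^sub>0 'k"

definition mvar :: "var \<Rightarrow> 'k::comm_ring_1 mpoly" where
  "mvar v = Poly_Mapping.single (Poly_Mapping.single v 1) 1"

definition mconst :: "'k::comm_ring_1 \<Rightarrow> 'k mpoly" where
  "mconst c = Poly_Mapping.single 0 c"

definition pdiff :: "var \<Rightarrow> 'k::comm_ring_1 mpoly \<Rightarrow> 'k mpoly" where
  "pdiff v f = (\<Sum>m\<in>Poly_Mapping.keys f.
      Poly_Mapping.single (m - Poly_Mapping.single v 1)
        (Poly_Mapping.lookup f m * of_nat (Poly_Mapping.lookup m v)))"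

fun gen_br :: "var \<Rightarrow> var \<Rightarrow> 'k::comm_ring_1 mpoly" where
  "gen_br X2 X3 = 2 * mvar X1 * mvar X2 + mvar X2 ^ 2"
| "gen_br X3 X2 = - (2 * mvar X1 * mvar X2 + mvar X2 ^ 2)"
| "gen_br X3 X1 = mvar X1 ^ 2 + 2 * mvar X1 * mvar X2"
| "gen_br X1 X3 = - (mvar X1 ^ 2 + 2 * mvar X1 * mvar X2)"
| "gen_br _ _ = 0"

definition pbr :: "'k::comm_ring_1 mpoly \<Rightarrow> 'k mpoly \<Rightarrow> 'k mpoly" where
  "pbr f g = (\<Sum>u\<in>{X1,X2,X3}. \<Sum>v\<in>{X1,X2,X3}. pdiff u f * pdiff v g * gen_br u v)"

definition homogeneous :: "nat \<Rightarrow> 'k::comm_ring_1 mpoly \<Rightarrow> bool" where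
  "homogeneous d f \<longleftrightarrow> (\<forall>m\<in>Poly_Mapping.keys f. Poly_Mapping.lookup m X1 + Poly_Mapping.lookup m X2 + Poly_Mapping.lookup m X3 = d)"

definition is_k_alg_hom :: "('k::comm_ring_1 mpoly \<Rightarrow> 'k mpoly) \<Rightarrow> bool" where
  "is_k_alg_hom \<phi> \<longleftrightarrow>
     (\<forall>f g. \<phi> (f + g) = \<phi> f + \<phi> g) \<and>
     (\<forall>c f. \<phi> (mconst c * f) = mconst c * \<phi> f) \<and>
     (\<forall>f g. \<phi> (f * g) = \<phi> f * \<phi> g) \<and> \<phi> 1 = 1"

definition PAut_gr :: "('k::comm_ring_1 mpoly \<Rightarrow> 'k mpoly) set" where
  "PAut_gr = {\<phi>. is_k_alg_hom \<phi> \<and> bij \<phi> \<and>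
     (\<forall>d f. homogeneous d f \<longrightarrow> homogeneous d (\<phi> f)) \<and>
     (\<forall>f g. \<phi> (pbr f g) = pbr (\<phi> f) (\<phi> g))}"

fun var_of :: "nat \<Rightarrow> var" where
  "var_of 0 = X1" | "var_of (Suc 0) = X2" | "var_of _ = X3"

text \<open>Matrix of phi restricted to P_1 w.r.t. the basis x1,x2,x3
  (column j = coordinates of phi(x_j)).\<close>
definition lin_mat :: "('k::comm_ring_1 mpoly \<Rightarrow> 'k mpoly) \<Rightarrow> 'k mat" where
  "lin_mat \<phi> = mat 3 3 (\<lambda>(i, j).
      Poly_Mapping.lookup (\<phi> (mvar (var_of j))) (Poly_Mapping.single (var_of i) 1))"

definition poisson_reflection :: "('k::comm_ring_1 mpoly \<Rightarrow> 'k mpoly) \<Rightarrow> bool" where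
  "poisson_reflection \<phi> \<longleftrightarrow> \<phi> \<in> PAut_gr \<and> (\<exists>n>0. \<phi> ^^ n = id) \<and>
     (\<exists>\<xi>. \<xi> \<noteq> 1 \<and> (\<exists>n>0. \<xi> ^ n = 1) \<and>
        char_poly (lin_mat \<phi>) = [:-1, 1:] ^ 2 * [:-\<xi>, 1:])"

inductive_set gen_group :: "('a \<Rightarrow> 'a) set \<Rightarrow> ('a \<Rightarrow> 'a) set" for S where
  gen_id: "id \<in> gen_group S"
| gen_mult: "s \<in> S \<Longrightarrow> g \<in> gen_group S \<Longrightarrow> s \<circ> g \<in> gen_group S"
| gen_inv: "s \<in> S \<Longrightarrow> g \<in> gen_group S \<Longrightarrow> inv_into UNIV s \<circ> g \<in> gen_group S"

definition invariants :: "('k::comm_ring_1 mpoly \<Rightarrow> 'k mpoly) set \<Rightarrow> 'k mpoly set" where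
  "invariants G = {f. \<forall>g\<in>G. g f = f}"

definition poisson_iso_to_subalg :: "'k::comm_ring_1 mpoly set \<Rightarrow> bool" where
  "poisson_iso_to_subalg A \<longleftrightarrow> (\<exists>\<psi>. bij_betw \<psi> UNIV A \<and> is_k_alg_hom \<psi> \<and>
      (\<forall>f g. \<psi> (pbr f g) = pbr (\<psi> f) (\<psi> g)))"

definition alg_closed :: "'k::field itself \<Rightarrow> bool" where
  "alg_closed _ \<longleftrightarrow> (\<forall>p::'k poly. Polynomial.degree p > 0 \<longrightarrow> (\<exists>x. poly p x = 0))"

end

theory Submission
  imports Defs
begin


section \<open>Monomials\<close>

definition mn :: "nat \<Rightarrow> nat \<Rightarrow> nat \<Rightarrow> (var \<Rightarrow>\<^sub>0 nat)" where
  "mn a b c = Poly_Mapping.single X1 a + Poly_Mapping.single X2 b + Poly_Mapping.single X3 c"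

definition mdeg :: "(var \<Rightarrow>\<^sub>0 nat) \<Rightarrow> nat" where
  "mdeg m = Poly_Mapping.lookup m X1 + Poly_Mapping.lookup m X2 + Poly_Mapping.lookup m X3"

lemma lookup_mn [simp]:
  "Poly_Mapping.lookup (mn a b c) X1 = a"
  "Poly_Mapping.lookup (mn a b c) X2 = b"
  "Poly_Mapping.lookup (mn a b c) X3 = c"
  by (simp_all add: mn_def lookup_add lookup_single)

lemma mn_eq_iff [simp]: "mn a b c = mn a' b' c' \<longleftrightarrow> a = a' \<and> b = b' \<and> c = c'"
  by (metis lookup_mn)

lemma mn_of: "m = mn (Poly_Mapping.lookup m X1) (Poly_Mapping.lookup m X2) (Poly_Mapping.lookup m X3)"
  by (rule poly_mapping_eqI) (case_tac k; simp)

lemma mn_add [simp]: "mn a b c + mn a' b' c' = mn (a+a') (b+b') (c+c')"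
  by (rule poly_mapping_eqI) (case_tac k; simp add: lookup_add)

lemma mn_zero: "(0::var \<Rightarrow>\<^sub>0 nat) = mn 0 0 0"
  by (rule poly_mapping_eqI) (case_tac k; simp)

lemma mn_minus [simp]: "mn a b c - mn a' b' c' = mn (a-a') (b-b') (c-c')"
  by (rule poly_mapping_eqI) (case_tac k; simp add: lookup_minus)

lemma single_var_mn:
  "Poly_Mapping.single X1 1 = mn 1 0 0"
  "Poly_Mapping.single X2 1 = mn 0 1 0"
  "Poly_Mapping.single X3 1 = mn 0 0 1"
  by (rule poly_mapping_eqI; case_tac k; simp add: lookup_single mn_def lookup_add)+

lemma mdeg_mn [simp]: "mdeg (mn a b c) = a + b + c"
  by (simp add: mdeg_def)

lemma mdeg_add [simp]: "mdeg (m + n) = mdeg m + mdeg n"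
  by (simp add: mdeg_def lookup_add)

lemma mdeg_zero_iff: "mdeg m = 0 \<longleftrightarrow> m = 0"
  by (subst (2) mn_of) (auto simp: mdeg_def mn_zero)

lemma homogeneous_mdeg: "homogeneous d f \<longleftrightarrow> (\<forall>m\<in>Poly_Mapping.keys f. mdeg m = d)"
  by (simp add: homogeneous_def mdeg_def)

lemma mvar_mn:
  "mvar X1 = Poly_Mapping.single (mn 1 0 0) 1"
  "mvar X2 = Poly_Mapping.single (mn 0 1 0) 1"
  "mvar X3 = Poly_Mapping.single (mn 0 0 1) 1"
  unfolding mvar_def single_var_mn by simp_all

lemma mconst_mn: "mconst c = Poly_Mapping.single (mn 0 0 0) c"
  by (simp add: mconst_def mn_zero)

lemma mconst_add: "mconst (a + b) = mconst a + mconst b"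
  by (simp add: mconst_def single_add)
lemma mconst_mult: "mconst (a * b) = mconst a * mconst b"
  by (simp add: mconst_def mult_single)
lemma mconst_diff: "mconst (a - b) = mconst a - mconst b"
  by (simp add: mconst_def single_diff)
lemma mconst_uminus: "mconst (- a) = - mconst a"
  by (simp add: mconst_def single_uminus)
lemma mconst_0 [simp]: "mconst 0 = 0"
  by (simp add: mconst_def)
lemma mconst_1 [simp]: "mconst 1 = 1"
  by (simp add: mconst_def)
lemma mconst_numeral [simp]: "mconst (numeral n) = numeral n"
  by (simp add: mconst_def)

lemmas mconst_simps = mconst_add mconst_mult mconst_diff mconst_uminus

lemma lookup_single_mult:
  fixes f :: "'k::comm_ring_1 mpoly"
  shows "Poly_Mapping.lookup (Poly_Mapping.single a k * f) (a + m) = k * Poly_Mapping.lookup f m"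
proof -
  have "(\<Sum>q. Poly_Mapping.lookup f q when a + m = a + q) = (\<Sum>q. Poly_Mapping.lookup f q when m = q)"
    by (rule Sum_any.cong) (rule when_cong, auto)
  then show ?thesis by (simp add: lookup_mult lookup_single when_mult)
qed

lemma lookup_mconst_mult: "Poly_Mapping.lookup (mconst k * f) m = k * Poly_Mapping.lookup f m"
  using lookup_single_mult[of 0 k f m] by (simp add: mconst_def)

lemma lookup_single_mult_mn:
  fixes f :: "'k::comm_ring_1 mpoly"
  shows "Poly_Mapping.lookup (Poly_Mapping.single (mn a b c) k * f) (mn a' b' c') =
    (if a \<le> a' \<and> b \<le> b' \<and> c \<le> c' then k * Poly_Mapping.lookup f (mn (a'-a) (b'-b) (c'-c)) else 0)"
proof (cases "a \<le> a' \<and> b \<le> b' \<and> c \<le> c'")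
  case True
  then have "mn a' b' c' = mn a b c + mn (a'-a) (b'-b) (c'-c)" by simp
  then show ?thesis using True by (metis lookup_single_mult)
next
  case False
  have "\<not> (mn a' b' c' = mn a b c + q)" for q
  proof
    assume "mn a' b' c' = mn a b c + q"
    then have "mn a' b' c' = mn (a + Poly_Mapping.lookup q X1) (b + Poly_Mapping.lookup q X2) (c + Poly_Mapping.lookup q X3)"
      by (subst (asm) mn_of[of q]) simp
    then show False using False by simp
  qed
  then have "(\<Sum>q. Poly_Mapping.lookup f q when mn a' b' c' = mn a b c + q) = 0"
    by simp
  then show ?thesis using False
    by (auto simp add: lookup_mult lookup_single when_mult)
qed


lemma single_var_mn' [simp]:
  "Poly_Mapping.single X1 (Suc 0) = mn 1 0 0"
  "Poly_Mapping.single X2 (Suc 0) = mn 0 1 0"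
  "Poly_Mapping.single X3 (Suc 0) = mn 0 0 1"
  using single_var_mn by simp_all

lemma pdiff_superset:
  fixes f :: "'k::comm_ring_1 mpoly"
  assumes "finite S" "Poly_Mapping.keys f \<subseteq> S"
  shows "pdiff v f = (\<Sum>m\<in>S. Poly_Mapping.single (m - Poly_Mapping.single v 1)
        (Poly_Mapping.lookup f m * of_nat (Poly_Mapping.lookup m v)))"
  unfolding pdiff_def
  by (rule sum.mono_neutral_left) (use assms in \<open>auto simp: in_keys_iff\<close>)

lemma pdiff_add: "pdiff v (f + g) = pdiff v f + pdiff v (g :: 'k::comm_ring_1 mpoly)"
proof -
  let ?S = "Poly_Mapping.keys f \<union> Poly_Mapping.keys g"
  have "pdiff v (f + g) = (\<Sum>m\<in>?S. Poly_Mapping.single (m - Poly_Mapping.single v 1)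
        (Poly_Mapping.lookup (f+g) m * of_nat (Poly_Mapping.lookup m v)))"
    by (rule pdiff_superset) (auto simp: keys_add)
  also have "\<dots> = (\<Sum>m\<in>?S. Poly_Mapping.single (m - Poly_Mapping.single v 1)
        (Poly_Mapping.lookup f m * of_nat (Poly_Mapping.lookup m v))) +
     (\<Sum>m\<in>?S. Poly_Mapping.single (m - Poly_Mapping.single v 1)
        (Poly_Mapping.lookup g m * of_nat (Poly_Mapping.lookup m v)))"
    by (simp add: lookup_add distrib_right single_add sum.distrib)
  also have "\<dots> = pdiff v f + pdiff v g"
    by (subst (1 2) pdiff_superset[of ?S]) auto
  finally show ?thesis .
qed

lemma pdiff_zero [simp]: "pdiff v 0 = 0"
  by (simp add: pdiff_def)

lemma pdiff_uminus: "pdiff v (- f) = - pdiff v (f :: 'k::comm_ring_1 mpoly)"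
proof -
  have "pdiff v f + pdiff v (-f) = 0" using pdiff_add[of v f "-f"] by simp
  then show ?thesis by (metis add.inverse_unique)
qed

lemma pdiff_diff: "pdiff v (f - g) = pdiff v f - pdiff v (g :: 'k::comm_ring_1 mpoly)"
  using pdiff_add[of v f "-g"] pdiff_uminus[of v g] by simp

lemma pdiff_single: "pdiff v (Poly_Mapping.single m (c :: 'k::comm_ring_1)) =
   Poly_Mapping.single (m - Poly_Mapping.single v 1) (c * of_nat (Poly_Mapping.lookup m v))"
  by (cases "c = 0") (simp_all add: pdiff_def)

definition lin :: "'k::comm_ring_1 \<Rightarrow> 'k \<Rightarrow> 'k \<Rightarrow> 'k mpoly" where
  "lin a b c = mconst a * mvar X1 + mconst b * mvar X2 + mconst c * mvar X3"

lemma lin_sgl: "lin a b c = Poly_Mapping.single (mn 1 0 0) a + Poly_Mapping.single (mn 0 1 0) b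
   + Poly_Mapping.single (mn 0 0 1) c"
  by (simp add: lin_def mconst_mn mvar_mn mult_single)

lemma lookup_lin [simp]:
  "Poly_Mapping.lookup (lin a b c) (mn 1 0 0) = a"
  "Poly_Mapping.lookup (lin a b c) (mn 0 1 0) = b"
  "Poly_Mapping.lookup (lin a b c) (mn 0 0 1) = c"
  by (simp_all add: lin_sgl lookup_add lookup_single)

lemma lin_eq_iff [simp]: "lin a b c = lin a' b' c' \<longleftrightarrow> a = a' \<and> b = b' \<and> c = c'"
  by (metis lookup_lin)

lemma lin_add [simp]: "lin a b c + lin a' b' c' = lin (a+a') (b+b') (c+c')"
  by (simp add: lin_def mconst_simps algebra_simps)
lemma lin_uminus [simp]: "- lin a b c = lin (-a) (-b) (-c)"
  by (simp add: lin_def mconst_simps algebra_simps)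
lemma lin_diff [simp]: "lin a b c - lin a' b' c' = lin (a-a') (b-b') (c-c')"
  by (simp add: lin_def mconst_simps algebra_simps)
lemma lin_smult [simp]: "mconst k * lin a b c = lin (k*a) (k*b) (k*c)"
  by (simp add: lin_def mconst_simps algebra_simps)
lemma lin_zero [simp]: "lin 0 0 0 = 0"
  by (simp add: lin_def)
lemma mvar_lin: "mvar X1 = lin 1 0 0" "mvar X2 = lin 0 1 0" "mvar X3 = lin 0 0 1"
  by (simp_all add: lin_def)

lemma pdiff_lin [simp]:
  "pdiff X1 (lin a b c) = mconst a"
  "pdiff X2 (lin a b c) = mconst b"
  "pdiff X3 (lin a b c) = mconst c"
  by (simp_all add: lin_sgl pdiff_add pdiff_single single_var_mn mconst_def flip: mn_zero)

section \<open>The bracket\<close>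

definition Q1 :: "'k::comm_ring_1 mpoly" where "Q1 = mvar X1 ^ 2 + 2 * mvar X1 * mvar X2"
definition Q2 :: "'k::comm_ring_1 mpoly" where "Q2 = 2 * mvar X1 * mvar X2 + mvar X2 ^ 2"

lemma numeral_mult_single: "(numeral n :: 'k::comm_ring_1 mpoly) * Poly_Mapping.single m c = Poly_Mapping.single m (numeral n * c)"
  by (metis add_0 mult_single single_numeral)

lemma Q1_sgl: "Q1 = Poly_Mapping.single (mn 2 0 0) 1 + Poly_Mapping.single (mn 1 1 0) (2::'k::comm_ring_1)"
  by (simp add: Q1_def power2_eq_square mvar_mn mult_single numeral_mult_single mult.assoc numeral_2_eq_2)
lemma Q2_sgl: "Q2 = Poly_Mapping.single (mn 0 2 0) 1 + Poly_Mapping.single (mn 1 1 0) (2::'k::comm_ring_1)"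
  by (simp add: Q2_def power2_eq_square mvar_mn mult_single numeral_mult_single mult.assoc add.commute numeral_2_eq_2)

lemma pbr_expand: "pbr f g = pdiff X1 f * pdiff X3 g * (- Q1) + pdiff X2 f * pdiff X3 g * Q2
   + pdiff X3 f * pdiff X1 g * Q1 + pdiff X3 f * pdiff X2 g * (- Q2)"
  by (simp add: pbr_def Q1_def Q2_def)

lemma pbr_lin_left: "pbr (lin a1 a2 a3) g =
   (mconst a2 * pdiff X3 g - mconst a3 * pdiff X2 g) * Q2 + (mconst a3 * pdiff X1 g - mconst a1 * pdiff X3 g) * Q1"
  by (simp add: pbr_expand algebra_simps)

lemma pbr_lin_lin: "pbr (lin a1 a2 a3) (lin b1 b2 b3) =
   mconst (a2*b3 - a3*b2) * Q2 + mconst (a3*b1 - a1*b3) * Q1"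
  by (simp add: pbr_lin_left mconst_simps algebra_simps)

lemma pbr_decomp: "pbr f g = mvar X1 * (mvar X1 * (pdiff X3 f * pdiff X1 g - pdiff X1 f * pdiff X3 g))
  + mvar X1 * (mvar X2 * (2 * ((pdiff X2 f * pdiff X3 g - pdiff X3 f * pdiff X2 g) + (pdiff X3 f * pdiff X1 g - pdiff X1 f * pdiff X3 g))))
  + mvar X2 * (mvar X2 * (pdiff X2 f * pdiff X3 g - pdiff X3 f * pdiff X2 g))"
  by (simp add: pbr_expand Q1_def Q2_def algebra_simps power2_eq_square)

lemma lookup_Q [simp]:
  "Poly_Mapping.lookup Q1 (mn 2 0 0) = 1" "Poly_Mapping.lookup Q1 (mn 1 1 0) = 2" "Poly_Mapping.lookup Q1 (mn 0 2 0) = 0"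
  "Poly_Mapping.lookup Q2 (mn 2 0 0) = 0" "Poly_Mapping.lookup Q2 (mn 1 1 0) = 2" "Poly_Mapping.lookup Q2 (mn 0 2 0) = 1"
  by (simp_all add: Q1_sgl Q2_sgl lookup_add lookup_single)


context fixes \<phi> :: "'k::comm_ring_1 mpoly \<Rightarrow> 'k mpoly" assumes hom: "is_k_alg_hom \<phi>"
begin

lemma hom_add: "\<phi> (f + g) = \<phi> f + \<phi> g" using hom unfolding is_k_alg_hom_def by blast
lemma hom_mult: "\<phi> (f * g) = \<phi> f * \<phi> g" using hom unfolding is_k_alg_hom_def by blast
lemma hom_one: "\<phi> 1 = 1" using hom unfolding is_k_alg_hom_def by blast
lemma hom_smult: "\<phi> (mconst c * f) = mconst c * \<phi> f" using hom unfolding is_k_alg_hom_def by blast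
lemma hom_zero: "\<phi> 0 = 0" using hom_add[of 0 0] by simp
lemma hom_uminus: "\<phi> (- f) = - \<phi> f"
  using hom_add[of f "-f"] hom_zero by (simp add: add.inverse_unique)
lemma hom_diff: "\<phi> (f - g) = \<phi> f - \<phi> g"
  using hom_add[of f "-g"] hom_uminus[of g] by simp
lemma hom_mconst: "\<phi> (mconst c) = mconst c"
  using hom_smult[of c 1] hom_one by simp
lemma hom_sum: "\<phi> (sum h S) = (\<Sum>x\<in>S. \<phi> (h x))"
  by (induction S rule: infinite_finite_induct) (simp_all add: hom_zero hom_add)
lemma hom_numeral: "\<phi> (numeral n) = numeral n"
  using hom_mconst[of "numeral n"] by simp
lemma hom_power: "\<phi> (f ^ n) = \<phi> f ^ n"
  by (induction n) (simp_all add: hom_one hom_mult)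
lemma hom_lin: "\<phi> (lin a b c) = mconst a * \<phi> (mvar X1) + mconst b * \<phi> (mvar X2) + mconst c * \<phi> (mvar X3)"
  by (simp add: lin_def hom_add hom_smult)

end

lemma mdeg1_cases: assumes "mdeg m = 1" shows "m = mn 1 0 0 \<or> m = mn 0 1 0 \<or> m = mn 0 0 1"
proof -
  obtain a b c where m: "m = mn a b c" using mn_of by blast
  then have "a + b + c = 1" using assms by simp
  then have "(a = 1 \<and> b = 0 \<and> c = 0) \<or> (a = 0 \<and> b = 1 \<and> c = 0) \<or> (a = 0 \<and> b = 0 \<and> c = 1)" by arith
  then show ?thesis using m by auto
qed

lemma lookup_lin_gen: "Poly_Mapping.lookup (lin a b c) m =
   (a when m = mn 1 0 0) + (b when m = mn 0 1 0) + (c when m = mn 0 0 1)"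
  by (simp add: lin_sgl lookup_add lookup_single eq_commute)

lemma homogeneous1_lin:
  assumes "homogeneous 1 (f :: 'k::comm_ring_1 mpoly)"
  shows "f = lin (Poly_Mapping.lookup f (mn 1 0 0)) (Poly_Mapping.lookup f (mn 0 1 0)) (Poly_Mapping.lookup f (mn 0 0 1))"
proof (rule poly_mapping_eqI)
  fix m
  show "Poly_Mapping.lookup f m = Poly_Mapping.lookup (lin (Poly_Mapping.lookup f (mn 1 0 0)) (Poly_Mapping.lookup f (mn 0 1 0)) (Poly_Mapping.lookup f (mn 0 0 1))) m"
  proof (cases "m \<in> Poly_Mapping.keys f")
    case True
    then have "mdeg m = 1" using assms by (simp add: homogeneous_mdeg)
    from mdeg1_cases[OF this] show ?thesis by (elim disjE) (simp_all add: lookup_lin_gen)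
  next
    case False
    then show ?thesis by (auto simp: lookup_lin_gen in_keys_iff when_def)
  qed
qed

lemma homogeneous_lin: "homogeneous 1 (lin a b c)"
  unfolding homogeneous_mdeg
proof
  fix m assume "m \<in> Poly_Mapping.keys (lin a b c)"
  then have "Poly_Mapping.lookup (lin a b c) m \<noteq> 0" by (simp add: in_keys_iff)
  then have "m = mn 1 0 0 \<or> m = mn 0 1 0 \<or> m = mn 0 0 1"
    by (auto simp: lookup_lin_gen when_def split: if_splits)
  then show "mdeg m = 1" by auto
qed

section \<open>Homogeneous components\<close>

definition hc :: "nat \<Rightarrow> 'k::comm_ring_1 mpoly \<Rightarrow> 'k mpoly" where
  "hc d f = (\<Sum>m\<in>{m\<in>Poly_Mapping.keys f. mdeg m = d}. Poly_Mapping.single m (Poly_Mapping.lookup f m))"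

lemma lookup_hc: "Poly_Mapping.lookup (hc d f) m = (if mdeg m = d then Poly_Mapping.lookup f m else 0)"
proof -
  have "Poly_Mapping.lookup (hc d f) m = (\<Sum>m'\<in>{m\<in>Poly_Mapping.keys f. mdeg m = d}. (Poly_Mapping.lookup f m' when m' = m))"
    by (simp add: hc_def lookup_sum lookup_single)
  also have "\<dots> = (if m \<in> {m\<in>Poly_Mapping.keys f. mdeg m = d} then Poly_Mapping.lookup f m else 0)"
    by (simp add: when_def sum.delta)
  also have "\<dots> = (if mdeg m = d then Poly_Mapping.lookup f m else 0)"
    by (auto simp: in_keys_iff)
  finally show ?thesis .
qed

definition lowdeg :: "nat \<Rightarrow> 'k::comm_ring_1 mpoly \<Rightarrow> bool" where
  "lowdeg d f \<longleftrightarrow> (\<forall>m\<in>Poly_Mapping.keys f. d \<le> mdeg m)"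

lemma keys_mult_mem: "m \<in> Poly_Mapping.keys (f * g) \<Longrightarrow> \<exists>a b. m = a + b \<and> a \<in> Poly_Mapping.keys f \<and> b \<in> Poly_Mapping.keys g"
  using keys_mult[of f g] by blast

lemma homogeneous_mult: "homogeneous i f \<Longrightarrow> homogeneous j g \<Longrightarrow> homogeneous (i+j) (f * g)"
  by (auto simp: homogeneous_mdeg dest!: keys_mult_mem)

lemma lowdeg_mult: "lowdeg i f \<Longrightarrow> lowdeg j g \<Longrightarrow> lowdeg (i+j) (f * g)"
  by (fastforce simp: lowdeg_def dest!: keys_mult_mem)

lemma lowdeg_add: "lowdeg d f \<Longrightarrow> lowdeg d g \<Longrightarrow> lowdeg d (f + g)"
  by (auto simp: lowdeg_def dest!: set_mp[OF keys_add])

lemma homogeneous_lowdeg: "homogeneous d f \<Longrightarrow> lowdeg d f"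
  by (simp add: homogeneous_mdeg lowdeg_def)

lemma homogeneous_hc: "homogeneous d (hc d f)"
  by (auto simp: homogeneous_mdeg in_keys_iff lookup_hc split: if_splits)

lemma lowdeg_step: assumes "lowdeg d f" shows "lowdeg (Suc d) (f - hc d f)"
  unfolding lowdeg_def
proof
  fix m assume "m \<in> Poly_Mapping.keys (f - hc d f)"
  then have "Poly_Mapping.lookup (f - hc d f) m \<noteq> 0" by (simp add: in_keys_iff)
  then have "mdeg m \<noteq> d" "m \<in> Poly_Mapping.keys f"
    by (auto simp: lookup_minus lookup_hc in_keys_iff split: if_splits)
  with assms show "Suc d \<le> mdeg m" by (force simp: lowdeg_def)
qed

lemma lowdeg_lookup: assumes "lowdeg d f" "mdeg m < d" shows "Poly_Mapping.lookup f m = 0"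
proof (rule ccontr)
  assume "Poly_Mapping.lookup f m \<noteq> 0"
  then have "m \<in> Poly_Mapping.keys f" by (simp add: in_keys_iff)
  then show False using assms by (auto simp: lowdeg_def)
qed

lemma homogeneous_lookup: assumes "homogeneous d f" "mdeg m \<noteq> d" shows "Poly_Mapping.lookup f m = 0"
proof (rule ccontr)
  assume "Poly_Mapping.lookup f m \<noteq> 0"
  then have "m \<in> Poly_Mapping.keys f" by (simp add: in_keys_iff)
  then show False using assms by (auto simp: homogeneous_mdeg)
qed

lemma lowdeg1: assumes "Poly_Mapping.lookup f 0 = 0" shows "lowdeg 1 f"
  unfolding lowdeg_def
proof
  fix m assume "m \<in> Poly_Mapping.keys f"
  then have "m \<noteq> 0" using assms by (auto simp: in_keys_iff)
  then have "mdeg m \<noteq> 0" by (simp add: mdeg_zero_iff)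
  then show "1 \<le> mdeg m" by simp
qed

lemma lowdeg_mono: "lowdeg d f \<Longrightarrow> e \<le> d \<Longrightarrow> lowdeg e f"
  by (auto simp: lowdeg_def)

lemma lookup_mult_deg2:
  fixes f g :: "'k::comm_ring_1 mpoly"
  assumes "Poly_Mapping.lookup f 0 = 0" "Poly_Mapping.lookup g 0 = 0" "mdeg m = 2"
  shows "Poly_Mapping.lookup (f * g) m = Poly_Mapping.lookup (hc 1 f * hc 1 g) m"
proof -
  have lf: "lowdeg 1 f" and lg: "lowdeg 1 g" using assms lowdeg1 by auto
  define f' where "f' = f - hc 1 f"
  define g' where "g' = g - hc 1 g"
  have f': "lowdeg 2 f'" using lowdeg_step[OF lf] by (simp add: f'_def numeral_2_eq_2)
  have g': "lowdeg 2 g'" using lowdeg_step[OF lg] by (simp add: g'_def numeral_2_eq_2)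
  have eq: "f * g = hc 1 f * hc 1 g + (hc 1 f * g' + f' * g)"
    by (simp add: f'_def g'_def algebra_simps)
  have "lowdeg 3 (hc 1 f * g' + f' * g)"
    using lowdeg_mult[OF homogeneous_lowdeg[OF homogeneous_hc] g', of 1 f]
      lowdeg_mult[OF f' lg] by (intro lowdeg_add) (simp_all add: eval_nat_numeral)
  then have "Poly_Mapping.lookup (hc 1 f * g' + f' * g) m = 0"
    using assms(3) by (intro lowdeg_lookup) auto
  then show ?thesis by (simp only: eq lookup_add) simp
qed

lemma lookup_mult_deg3:
  fixes f g :: "'k::comm_ring_1 mpoly"
  assumes "Poly_Mapping.lookup f 0 = 0" "Poly_Mapping.lookup g 0 = 0" "mdeg m = 3"
  shows "Poly_Mapping.lookup (f * g) m = Poly_Mapping.lookup (hc 1 f * hc 2 g + hc 2 f * hc 1 g) m"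
proof -
  have lf: "lowdeg 1 f" and lg: "lowdeg 1 g" using assms lowdeg1 by auto
  define f' where "f' = f - hc 1 f"
  define g' where "g' = g - hc 1 g"
  have f': "lowdeg 2 f'" using lowdeg_step[OF lf] by (simp add: f'_def numeral_2_eq_2)
  have g': "lowdeg 2 g'" using lowdeg_step[OF lg] by (simp add: g'_def numeral_2_eq_2)
  define f'' where "f'' = f' - hc 2 f'"
  define g'' where "g'' = g' - hc 2 g'"
  have f'': "lowdeg 3 f''" using lowdeg_step[OF f'] by (simp add: f''_def numeral_3_eq_3 numeral_2_eq_2)
  have g'': "lowdeg 3 g''" using lowdeg_step[OF g'] by (simp add: g''_def numeral_3_eq_3 numeral_2_eq_2)
  have hf: "hc 2 f' = hc 2 f" "hc 2 g' = hc 2 g"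
    by (auto simp: f'_def g'_def poly_mapping_eqI lookup_hc lookup_minus)
  have h1: "homogeneous 1 (hc 1 f)" "homogeneous 1 (hc 1 g)" by (rule homogeneous_hc)+
  have h2: "homogeneous 2 (hc 2 f)" "homogeneous 2 (hc 2 g)" by (rule homogeneous_hc)+
  have eq: "f * g = hc 1 f * hc 1 g + (hc 1 f * hc 2 g + hc 2 f * hc 1 g) + (hc 1 f * g'' + hc 2 f * g' + f'' * g)"
    by (simp add: f'_def g'_def f''_def g''_def hf[symmetric] algebra_simps)
  have "lowdeg 4 (hc 1 f * g'' + hc 2 f * g' + f'' * g)"
    using lowdeg_mult[OF homogeneous_lowdeg[OF h1(1)] g'']
      lowdeg_mult[OF homogeneous_lowdeg[OF h2(1)] g'] lowdeg_mult[OF f'' lg]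
    by (intro lowdeg_add) (simp_all add: eval_nat_numeral)
  then have z1: "Poly_Mapping.lookup (hc 1 f * g'' + hc 2 f * g' + f'' * g) m = 0"
    using assms(3) by (intro lowdeg_lookup) auto
  have "homogeneous 2 (hc 1 f * hc 1 g)"
    using homogeneous_mult[OF h1] by (simp add: eval_nat_numeral)
  then have z2: "Poly_Mapping.lookup (hc 1 f * hc 1 g) m = 0"
    using assms(3) by (intro homogeneous_lookup) auto
  show ?thesis using z1 z2 by (simp only: eq lookup_add) simp
qed


lemma hc_add: "hc d (f + g) = hc d f + hc d g"
  by (rule poly_mapping_eqI) (simp add: lookup_hc lookup_add)

lemma hc_zero [simp]: "hc d 0 = 0"
  by (rule poly_mapping_eqI) (simp add: lookup_hc)

lemma hc_sum: "hc d (sum h S) = (\<Sum>x\<in>S. hc d (h x))"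
  by (induction S rule: infinite_finite_induct) (simp_all add: hc_add)

lemma hc_homog: "homogeneous i h \<Longrightarrow> hc d h = (if i = d then h else 0)"
  by (rule poly_mapping_eqI) (auto simp: lookup_hc homogeneous_lookup)

lemma hc_decomp:
  assumes "\<forall>m\<in>Poly_Mapping.keys f. mdeg m \<le> n"
  shows "f = (\<Sum>i\<le>n. hc i f)"
proof (rule poly_mapping_eqI)
  fix m
  have "Poly_Mapping.lookup (\<Sum>i\<le>n. hc i f) m = (\<Sum>i\<le>n. (if mdeg m = i then Poly_Mapping.lookup f m else 0))"
    by (simp add: lookup_sum lookup_hc)
  also have "\<dots> = (if mdeg m \<le> n then Poly_Mapping.lookup f m else 0)"
    by (simp add: sum.delta' eq_commute)
  also have "\<dots> = Poly_Mapping.lookup f m"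
    using assms by (auto simp: in_keys_iff)
  finally show "Poly_Mapping.lookup f m = Poly_Mapping.lookup (\<Sum>i\<le>n. hc i f) m" by simp
qed

lemma hc_bound: "\<exists>n. \<forall>m\<in>Poly_Mapping.keys f. mdeg m \<le> n"
  using finite_keys[of f] by (intro exI[of _ "\<Sum>m\<in>Poly_Mapping.keys f. mdeg m"]) (auto intro: member_le_sum)

lemma PAut_hom: "\<phi> \<in> PAut_gr \<Longrightarrow> is_k_alg_hom \<phi>"
  by (simp add: PAut_gr_def)
lemma PAut_homog: "\<phi> \<in> PAut_gr \<Longrightarrow> homogeneous d f \<Longrightarrow> homogeneous d (\<phi> f)"
  by (simp add: PAut_gr_def)
lemma PAut_bij: "\<phi> \<in> PAut_gr \<Longrightarrow> bij \<phi>"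
  by (simp add: PAut_gr_def)
lemma PAut_br: "\<phi> \<in> PAut_gr \<Longrightarrow> \<phi> (pbr f g) = pbr (\<phi> f) (\<phi> g)"
  by (simp add: PAut_gr_def)

lemma PAut_hc:
  assumes "\<phi> \<in> PAut_gr"
  shows "\<phi> (hc d f) = hc d (\<phi> f)"
proof -
  obtain n where n: "\<forall>m\<in>Poly_Mapping.keys f. mdeg m \<le> n" using hc_bound by blast
  define N where "N = max n d"
  have nN: "\<forall>m\<in>Poly_Mapping.keys f. mdeg m \<le> N" using n by (auto simp: N_def)
  have hom: "is_k_alg_hom \<phi>" using assms by (rule PAut_hom)
  have "hc d (\<phi> f) = hc d (\<phi> (\<Sum>i\<le>N. hc i f))" using hc_decomp[OF nN] by simp
  also have "\<dots> = (\<Sum>i\<le>N. hc d (\<phi> (hc i f)))" by (simp add: hom_sum[OF hom] hc_sum)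
  also have "\<dots> = (\<Sum>i\<le>N. (if i = d then \<phi> (hc i f) else 0))"
    by (rule sum.cong) (auto simp: hc_homog[OF PAut_homog[OF assms homogeneous_hc]])
  also have "\<dots> = \<phi> (hc d f)" by (simp add: sum.delta' N_def)
  finally show ?thesis by simp
qed


lemma refl_algebra:
  fixes a b c d e \<xi> :: "'k::field_char_0"
  assumes det: "(a*d - b*c)*e = \<xi>" and tr: "a + d + e = 2 + \<xi>" and mi: "(a*d - b*c) + (a+d)*e = 1 + 2*\<xi>"
    and x1: "\<xi> \<noteq> 1" "\<xi> \<noteq> 0"
    and e1: "2*a*c + c*c = - c*e"
    and e2: "2*(a*d+b*c) + 2*c*d = 2*d*e - 2*c*e"
    and e3: "2*b*d + d*d = d*e"
    and e4: "a*a + 2*a*c = e*a"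
    and e6: "b*b + 2*b*d = - e*b"
  shows "e = 1 \<and> ((a = 1 \<and> b = 1 \<and> c = 0 \<and> d = -1) \<or> (a = -1 \<and> b = 0 \<and> c = 1 \<and> d = 1)
     \<or> (a = 0 \<and> b = -1 \<and> c = -1 \<and> d = 0))"
proof -
  have e0: "e \<noteq> 0" and D0: "a*d - b*c \<noteq> 0" using det x1 by auto
  have key: "e = 1" if "a*d - b*c = - e*e" "a + d = 0"
  proof -
    have "e = 2 + \<xi>" using tr that by (Groebner_Basis.algebra)
    moreover have "- e*e = 1 + 2*\<xi>" using mi that by (Groebner_Basis.algebra)
    moreover have "- e*e*e = \<xi>" using det that(1) by simp
    ultimately have "(e - 1)*(e + 3) = 0" "- e*e*e = e - 2" by (Groebner_Basis.algebra)+
    then show "e = 1"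
    proof -
      from \<open>(e - 1)*(e + 3) = 0\<close> have "e = 1 \<or> e = -3" by (Groebner_Basis.algebra)
      then show ?thesis using \<open>- e*e*e = e - 2\<close> by auto
    qed
  qed
  show ?thesis
  proof (cases "c = 0")
    case c: True
    then have "a \<noteq> 0" "d \<noteq> 0" using D0 by auto
    have "a*(a - e) = 0" using e4 c by (Groebner_Basis.algebra)
    then have a: "a = e" using \<open>a \<noteq> 0\<close> by simp
    have "d*(2*b + d - e) = 0" using e3 by (Groebner_Basis.algebra)
    then have d: "d = e - 2*b" using \<open>d \<noteq> 0\<close> by (Groebner_Basis.algebra)
    show ?thesis
    proof (cases "b = 0")
      case True
      then have "3*e = 2 + \<xi>" "3*e*e = 1 + 2*\<xi>" "e*e*e = \<xi>" using tr mi det a d c by (Groebner_Basis.algebra)+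
      then have "(e - 1)*(e - 1) = 0" by (Groebner_Basis.algebra)
      then have "e = 1" by simp
      then show ?thesis using \<open>3*e = 2 + \<xi>\<close> x1 by simp
    next
      case False
      have "b*(b + 2*d + e) = 0" using e6 by (Groebner_Basis.algebra)
      then have "b + 2*d + e = 0" using False by simp
      then have "3*b = 3*e" using d by (Groebner_Basis.algebra)
      then have b: "b = e" by simp
      then have d': "d = -e" using d by simp
      have "e = 1" by (rule key) (use a b c d' in simp_all)
      then show ?thesis using a b c d' by simp
    qed
  next
    case c: False
    have "c*(2*a + c + e) = 0" using e1 by (Groebner_Basis.algebra)
    then have c': "c = -2*a - e" using c by (Groebner_Basis.algebra)
    show ?thesis
    proof (cases "b = 0")
      case b: True
      then have "a \<noteq> 0" "d \<noteq> 0" using D0 by auto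
      have "d*(d - e) = 0" using e3 b by (Groebner_Basis.algebra)
      then have d: "d = e" using \<open>d \<noteq> 0\<close> by simp
      have "a*(a + 2*c - e) = 0" using e4 by (Groebner_Basis.algebra)
      then have a: "a = e - 2*c" using \<open>a \<noteq> 0\<close> by (Groebner_Basis.algebra)
      then have "3*c = 3*e" using c' by (Groebner_Basis.algebra)
      then have cc: "c = e" by simp
      then have a': "a = -e" using a by simp
      have "e = 1" by (rule key) (use a' b cc d in simp_all)
      then show ?thesis using a' b cc d by simp
    next
      case b: False
      have "b*(b + 2*d + e) = 0" using e6 by (Groebner_Basis.algebra)
      then have b': "b = -2*d - e" using b by (Groebner_Basis.algebra)
      have "d*(2*b + d - e) = 0" using e3 by (Groebner_Basis.algebra)
      then have dd: "d = 0 \<or> d = e - 2*b" by (Groebner_Basis.algebra)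
      show ?thesis
      proof (cases "a = 0")
        case a: True
        then have cc: "c = -e" using c' by simp
        show ?thesis
        proof (cases "d = 0")
          case d: True
          then have bb: "b = -e" using b' by simp
          have "e = 1" by (rule key) (use a bb cc d in simp_all)
          then show ?thesis using a bb cc d by simp
        next
          case d: False
          then have "d = e - 2*b" using dd by simp
          then have "3*b = 3*e" using b' by (Groebner_Basis.algebra)
          then have bb: "b = e" by simp
          then have "d = -e" using \<open>d = e - 2*b\<close> by simp
          then have "\<xi> = -2" "0 = 1 + 2*\<xi>" using tr mi a bb cc by (Groebner_Basis.algebra)+
          then show ?thesis by simp
        qed
      next
        case a: False
        have "a*(a + 2*c - e) = 0" using e4 by (Groebner_Basis.algebra)
        then have aa: "a = e - 2*c" using a by (Groebner_Basis.algebra)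
        then have "3*c = 3*e" using c' by (Groebner_Basis.algebra)
        then have cc: "c = e" by simp
        then have a': "a = -e" using aa by simp
        show ?thesis
        proof (cases "d = 0")
          case d: True
          then have bb: "b = -e" using b' by simp
          have "\<xi> = -2" "0 = 1 + 2*\<xi>" using tr mi a' bb cc d by (Groebner_Basis.algebra)+
          then show ?thesis by simp
        next
          case d: False
          then have "d = e - 2*b" using dd by simp
          then have "3*b = 3*e" using b' by (Groebner_Basis.algebra)
          then have bb: "b = e" by simp
          then have d': "d = -e" using \<open>d = e - 2*b\<close> by simp
          have "6*(e*e) = 0" using e2 a' bb cc d' by (Groebner_Basis.algebra)
          then have "e = 0" by simp
          then show ?thesis using e0 by simp
        qed
      qed
    qed
  qed
qed


lemma det2: assumes "B \<in> carrier_mat 2 2"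
  shows "det B = B$$(0,0)*B$$(1,1) - B$$(0,1)*B$$(1,0)"
  using assms
  apply (subst laplace_expansion_row[of _ 2 0])
    apply (auto simp: cofactor_def numeral_2_eq_2 lessThan_Suc)
  apply (subst det_single, auto simp: mat_delete_def insert_index_def)+
  done
lemma det3: assumes "A \<in> carrier_mat 3 3"
  shows "det A = A$$(0,0)*A$$(1,1)*A$$(2,2) - A$$(0,0)*A$$(1,2)*A$$(2,1)
   - A$$(0,1)*A$$(1,0)*A$$(2,2) + A$$(0,1)*A$$(1,2)*A$$(2,0)
   + A$$(0,2)*A$$(1,0)*A$$(2,1) - A$$(0,2)*A$$(1,1)*A$$(2,0)"
  using assms
  apply (subst laplace_expansion_row[of _ 3 0])
    apply (auto simp: cofactor_def numeral_3_eq_3 lessThan_Suc)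
  apply (subst det2, auto simp: mat_delete_def insert_index_def numeral_2_eq_2 algebra_simps)+
  done

lemma char_poly3:
  fixes A :: "'a::comm_ring_1 mat"
  assumes "A \<in> carrier_mat 3 3"
  shows "char_poly A = [: -(A$$(0,0)*A$$(1,1)*A$$(2,2) - A$$(0,0)*A$$(1,2)*A$$(2,1)
   - A$$(0,1)*A$$(1,0)*A$$(2,2) + A$$(0,1)*A$$(1,2)*A$$(2,0)
   + A$$(0,2)*A$$(1,0)*A$$(2,1) - A$$(0,2)*A$$(1,1)*A$$(2,0)),
   A$$(0,0)*A$$(1,1) - A$$(0,1)*A$$(1,0) + A$$(0,0)*A$$(2,2) - A$$(0,2)*A$$(2,0)
   + A$$(1,1)*A$$(2,2) - A$$(1,2)*A$$(2,1),
   -(A$$(0,0)+A$$(1,1)+A$$(2,2)), 1:]"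
proof -
  have "char_poly A = det (char_poly_matrix A)" by (simp add: char_poly_def)
  also have "\<dots> = [:-A$$(0,0),1:]*[:-A$$(1,1),1:]*[:-A$$(2,2),1:] - [:-A$$(0,0),1:]*[:-A$$(1,2):]*[:-A$$(2,1):]
   - [:-A$$(0,1):]*[:-A$$(1,0):]*[:-A$$(2,2),1:] + [:-A$$(0,1):]*[:-A$$(1,2):]*[:-A$$(2,0):]
   + [:-A$$(0,2):]*[:-A$$(1,0):]*[:-A$$(2,1):] - [:-A$$(0,2):]*[:-A$$(1,1),1:]*[:-A$$(2,0):]"
    using assms by (subst det3) (auto simp: char_poly_matrix_def)
  finally show ?thesis by (simp add: algebra_simps)
qed

lemma lin_mult_lookup [simp]:
  "Poly_Mapping.lookup (lin a b c * lin a' b' c') (mn 2 0 0) = a * a'"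
  "Poly_Mapping.lookup (lin a b c * lin a' b' c') (mn 1 1 0) = a * b' + b * a'"
  "Poly_Mapping.lookup (lin a b c * lin a' b' c') (mn 0 2 0) = b * b'"
  by (simp_all add: lin_sgl distrib_left distrib_right mult_single lookup_add lookup_single when_def)

lemma lookup_numeral_mult: "Poly_Mapping.lookup ((numeral n :: 'k::comm_ring_1 mpoly) * f) m = numeral n * Poly_Mapping.lookup f m"
  using lookup_mconst_mult[of "numeral n" f m] by simp

lemma lin_mat_entries:
  "lin_mat \<phi> \<in> carrier_mat 3 3"
  "lin_mat \<phi> $$ (0,0) = Poly_Mapping.lookup (\<phi> (mvar X1)) (mn 1 0 0)"
  "lin_mat \<phi> $$ (1,0) = Poly_Mapping.lookup (\<phi> (mvar X1)) (mn 0 1 0)"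
  "lin_mat \<phi> $$ (2,0) = Poly_Mapping.lookup (\<phi> (mvar X1)) (mn 0 0 1)"
  "lin_mat \<phi> $$ (0,1) = Poly_Mapping.lookup (\<phi> (mvar X2)) (mn 1 0 0)"
  "lin_mat \<phi> $$ (1,1) = Poly_Mapping.lookup (\<phi> (mvar X2)) (mn 0 1 0)"
  "lin_mat \<phi> $$ (2,1) = Poly_Mapping.lookup (\<phi> (mvar X2)) (mn 0 0 1)"
  "lin_mat \<phi> $$ (0,2) = Poly_Mapping.lookup (\<phi> (mvar X3)) (mn 1 0 0)"
  "lin_mat \<phi> $$ (1,2) = Poly_Mapping.lookup (\<phi> (mvar X3)) (mn 0 1 0)"
  "lin_mat \<phi> $$ (2,2) = Poly_Mapping.lookup (\<phi> (mvar X3)) (mn 0 0 1)"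
  by (simp_all add: lin_mat_def eval_nat_numeral)

definition rtype :: "('k::comm_ring_1 mpoly \<Rightarrow> 'k mpoly) \<Rightarrow> nat \<Rightarrow> bool" where
  "rtype r t \<longleftrightarrow> (t = 1 \<and> r (mvar X1) = lin 1 1 0 \<and> r (mvar X2) = lin 0 (-1) 0) \<or>
     (t = 2 \<and> r (mvar X1) = lin (-1) 0 0 \<and> r (mvar X2) = lin 1 1 0) \<or>
     (t = 3 \<and> r (mvar X1) = lin 0 (-1) 0 \<and> r (mvar X2) = lin (-1) 0 0)"

lemma refl_class:
  fixes r :: "'k::field_char_0 mpoly \<Rightarrow> 'k mpoly"
  assumes "poisson_reflection r"
  shows "\<exists>p q. r (mvar X3) = lin p q 1 \<and> (\<exists>t. rtype r t)"
proof -
  have P: "r \<in> PAut_gr" using assms by (simp add: poisson_reflection_def)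
  have hom: "is_k_alg_hom r" using P by (rule PAut_hom)
  obtain \<xi> n where x1: "\<xi> \<noteq> 1" and n: "n > 0" "\<xi> ^ n = 1"
    and cp: "char_poly (lin_mat r) = [:-1, 1:] ^ 2 * [:-\<xi>, 1:]"
    using assms by (auto simp: poisson_reflection_def)
  have x0: "\<xi> \<noteq> 0" using n by (auto simp: power_0_left)
  define a where "a = Poly_Mapping.lookup (r (mvar X1)) (mn 1 0 0)"
  define b where "b = Poly_Mapping.lookup (r (mvar X1)) (mn 0 1 0)"
  define g1 where "g1 = Poly_Mapping.lookup (r (mvar X1)) (mn 0 0 1)"
  define c where "c = Poly_Mapping.lookup (r (mvar X2)) (mn 1 0 0)"
  define d where "d = Poly_Mapping.lookup (r (mvar X2)) (mn 0 1 0)"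
  define g2 where "g2 = Poly_Mapping.lookup (r (mvar X2)) (mn 0 0 1)"
  define p where "p = Poly_Mapping.lookup (r (mvar X3)) (mn 1 0 0)"
  define q where "q = Poly_Mapping.lookup (r (mvar X3)) (mn 0 1 0)"
  define e where "e = Poly_Mapping.lookup (r (mvar X3)) (mn 0 0 1)"
  have r1: "r (mvar X1) = lin a b g1" unfolding a_def b_def g1_def
    by (rule homogeneous1_lin, rule PAut_homog[OF P]) (simp only: mvar_lin homogeneous_lin)
  have r2: "r (mvar X2) = lin c d g2" unfolding c_def d_def g2_def
    by (rule homogeneous1_lin, rule PAut_homog[OF P]) (simp only: mvar_lin homogeneous_lin)
  have r3: "r (mvar X3) = lin p q e" unfolding p_def q_def e_def
    by (rule homogeneous1_lin, rule PAut_homog[OF P]) (simp only: mvar_lin homogeneous_lin)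
  have LM: "lin_mat r $$ (0,0) = a" "lin_mat r $$ (1,0) = b" "lin_mat r $$ (2,0) = g1"
    "lin_mat r $$ (0,1) = c" "lin_mat r $$ (1,1) = d" "lin_mat r $$ (2,1) = g2"
    "lin_mat r $$ (0,2) = p" "lin_mat r $$ (1,2) = q" "lin_mat r $$ (2,2) = e"
    unfolding lin_mat_entries a_def b_def c_def d_def e_def p_def q_def g1_def g2_def by (rule refl)+
  have "char_poly (lin_mat r) = [: -(a*d*e - a*q*g2 - c*b*e + c*q*g1 + p*b*g2 - p*d*g1),
      a*d - c*b + a*e - p*g1 + d*e - q*g2, -(a+d+e), 1:]"
    using char_poly3[OF lin_mat_entries(1), of r] unfolding LM by (simp add: algebra_simps)
  moreover have "([:-1, 1:] ^ 2 * [:-\<xi>, 1:] :: 'k poly) = [:-\<xi>, 1 + 2*\<xi>, -2-\<xi>, 1:]"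
    by (simp add: power2_eq_square algebra_simps)
  ultimately have cpe: "a*d*e - a*q*g2 - c*b*e + c*q*g1 + p*b*g2 - p*d*g1 = \<xi>"
     "a*d - c*b + a*e - p*g1 + d*e - q*g2 = 1 + 2*\<xi>" "a + d + e = 2 + \<xi>"
    using cp by (auto simp: algebra_simps)
  have br: "r (pbr f g) = pbr (r f) (r g)" for f g using P by (rule PAut_br)
  have Z: "pbr (lin a b g1) (lin c d g2) = 0"
    using br[of "mvar X1" "mvar X2"] unfolding r1 r2 by (simp add: mvar_lin pbr_lin_lin hom_zero[OF hom])
  have H: "b*g2 - g1*d = 0" "g1*c - a*g2 = 0"
    using arg_cong[OF Z, of "\<lambda>f. Poly_Mapping.lookup f (mn 0 2 0)"]
      arg_cong[OF Z, of "\<lambda>f. Poly_Mapping.lookup f (mn 2 0 0)"]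
    by (simp_all add: pbr_lin_lin lookup_add lookup_mconst_mult)
  have rQ2: "r Q2 = 2 * r (mvar X1) * r (mvar X2) + r (mvar X2) ^ 2"
    by (simp add: Q2_def hom_add[OF hom] hom_mult[OF hom] hom_numeral[OF hom] hom_power[OF hom])
  have rQ1: "r Q1 = r (mvar X1) ^ 2 + 2 * r (mvar X1) * r (mvar X2)"
    by (simp add: Q1_def hom_add[OF hom] hom_mult[OF hom] hom_numeral[OF hom] hom_power[OF hom])
  have p23: "pbr (mvar X2) (mvar X3) = (Q2 :: 'k mpoly)" "pbr (mvar X3) (mvar X1) = (Q1 :: 'k mpoly)"
    by (simp_all add: mvar_lin pbr_lin_lin)
  have Q2e: "2 * lin a b g1 * lin c d g2 + lin c d g2 ^ 2 = pbr (lin c d g2) (lin p q e)"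
    using br[of "mvar X2" "mvar X3"] unfolding p23 rQ2 r1 r2 r3 .
  have Q1e: "lin a b g1 ^ 2 + 2 * lin a b g1 * lin c d g2 = pbr (lin p q e) (lin a b g1)"
    using br[of "mvar X3" "mvar X1"] unfolding p23 rQ1 r1 r2 r3 .
  have E2: "2*(a*c) + c*c = g2*p - c*e" "2*(a*d + b*c) + 2*(c*d) = (d*e - g2*q)*2 + (g2*p - c*e)*2"
      "2*(b*d) + d*d = d*e - g2*q"
    using arg_cong[OF Q2e, of "\<lambda>f. Poly_Mapping.lookup f (mn 2 0 0)"]
      arg_cong[OF Q2e, of "\<lambda>f. Poly_Mapping.lookup f (mn 1 1 0)"]
      arg_cong[OF Q2e, of "\<lambda>f. Poly_Mapping.lookup f (mn 0 2 0)"]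
    by (simp_all del: One_nat_def add: pbr_lin_lin lookup_add lookup_mconst_mult power2_eq_square mult.assoc lookup_numeral_mult)
  have E1: "a*a + 2*(a*c) = e*a - p*g1" "2*(a*b) + 2*(a*d+b*c) = (q*g1 - e*b)*2 + (e*a - p*g1)*2"
      "b*b + 2*(b*d) = q*g1 - e*b"
    using arg_cong[OF Q1e, of "\<lambda>f. Poly_Mapping.lookup f (mn 2 0 0)"]
      arg_cong[OF Q1e, of "\<lambda>f. Poly_Mapping.lookup f (mn 1 1 0)"]
      arg_cong[OF Q1e, of "\<lambda>f. Poly_Mapping.lookup f (mn 0 2 0)"]
    by (simp_all del: One_nat_def add: pbr_lin_lin lookup_add lookup_mconst_mult power2_eq_square mult.assoc lookup_numeral_mult)
  have "(a*d*e - a*q*g2 - c*b*e + c*q*g1 + p*b*g2 - p*d*g1) * g1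
     = (a*e - p*g1)*(-(b*g2 - g1*d)) - (b*e - q*g1)*(g1*c - a*g2)"
    by (simp add: algebra_simps)
  then have "\<xi> * g1 = 0" using cpe(1) H by simp
  then have g1: "g1 = 0" using x0 by simp
  have "(a*d*e - a*q*g2 - c*b*e + c*q*g1 + p*b*g2 - p*d*g1) * g2
     = (d*e - q*g2)*(-(g1*c - a*g2)) - (c*e - p*g2)*(b*g2 - g1*d)"
    using g1 by (simp add: algebra_simps)
  then have "\<xi> * g2 = 0" using cpe(1) H by simp
  then have g2: "g2 = 0" using x0 by simp
  have R: "e = 1 \<and> ((a = 1 \<and> b = 1 \<and> c = 0 \<and> d = -1) \<or> (a = -1 \<and> b = 0 \<and> c = 1 \<and> d = 1)
     \<or> (a = 0 \<and> b = -1 \<and> c = -1 \<and> d = 0))"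
  proof (rule refl_algebra[where \<xi> = \<xi>])
    show "(a*d - b*c)*e = \<xi>" using cpe g1 g2 by (simp add: algebra_simps)
    show "a + d + e = 2 + \<xi>" using cpe g1 g2 by (simp add: algebra_simps)
    show "(a*d - b*c) + (a+d)*e = 1 + 2*\<xi>" using cpe g1 g2 by (simp add: algebra_simps)
    show "\<xi> \<noteq> 1" by (fact x1)
    show "\<xi> \<noteq> 0" by (fact x0)
    show "2*a*c + c*c = - c*e" using E2 g1 g2 by (simp add: algebra_simps)
    show "2*(a*d+b*c) + 2*c*d = 2*d*e - 2*c*e" using E2 g1 g2 by (simp add: algebra_simps)
    show "2*b*d + d*d = d*e" using E2 g1 g2 by (simp add: algebra_simps)
    show "a*a + 2*a*c = e*a" using E1 g1 g2 by (simp add: algebra_simps)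
    show "b*b + 2*b*d = - e*b" using E1 g1 g2 by (simp add: algebra_simps)
  qed
  then have "rtype r 1 \<or> rtype r 2 \<or> rtype r 3"
    using r1 r2 g1 g2 by (auto simp: rtype_def)
  then show ?thesis using r3 R by blast
qed


lemma gen_group_comp: "h \<in> gen_group S \<Longrightarrow> g \<in> gen_group S \<Longrightarrow> h \<circ> g \<in> gen_group S"
proof (induction h rule: gen_group.induct)
  case gen_id then show ?case by simp
next
  case (gen_mult s h)
  then have "h \<circ> g \<in> gen_group S" by (simp add: comp_def)
  then have "s \<circ> (h \<circ> g) \<in> gen_group S" by (rule gen_group.gen_mult[OF gen_mult.hyps(1)])
  then show ?case by (simp add: comp_def)
next
  case (gen_inv s h)
  then have "h \<circ> g \<in> gen_group S" by (simp add: comp_def)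
  then have "inv_into UNIV s \<circ> (h \<circ> g) \<in> gen_group S" by (rule gen_group.gen_inv[OF gen_inv.hyps(1)])
  then show ?case by (simp add: comp_def)
qed

lemma gen_group_base: "s \<in> S \<Longrightarrow> s \<in> gen_group S"
  using gen_group.gen_mult[OF _ gen_group.gen_id] by fastforce

lemma gen_group_inv: "s \<in> S \<Longrightarrow> inv_into UNIV s \<in> gen_group S"
  using gen_group.gen_inv[OF _ gen_group.gen_id] by fastforce

lemma gen_group_empty: "g \<in> gen_group {} \<Longrightarrow> g = id"
  by (induction rule: gen_group.induct) auto

lemma gen_group_invariant:
  assumes "\<forall>r\<in>R. bij r \<and> r f = f" "g \<in> gen_group R"
  shows "g f = f"
  using assms(2)
proof (induction rule: gen_group.induct)
  case gen_id then show ?case by simp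
next
  case (gen_mult s g) then show ?case using assms(1) by simp
next
  case (gen_inv s g)
  then have "bij s" "s f = f" using assms(1) by auto
  then have "inv_into UNIV s f = f" by (metis bij_is_inj inv_into_f_f UNIV_I)
  then show ?case using gen_inv by simp
qed

lemma homogeneous_add: "homogeneous d f \<Longrightarrow> homogeneous d g \<Longrightarrow> homogeneous d (f + g)"
  by (auto simp: homogeneous_mdeg dest!: set_mp[OF keys_add])

lemma homogeneous_zero: "homogeneous d 0"
  by (simp add: homogeneous_mdeg)

lemma homogeneous_sum: "(\<And>x. x \<in> S \<Longrightarrow> homogeneous d (h x)) \<Longrightarrow> homogeneous d (sum h S)"
  by (induction S rule: infinite_finite_induct) (simp_all add: homogeneous_zero homogeneous_add)

lemma rtype_apply:
  fixes r :: "'k::comm_ring_1 mpoly \<Rightarrow> 'k mpoly"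
  assumes "is_k_alg_hom r" "rtype r t" "r (mvar X3) = lin p q 1"
  shows "r (lin a b c) = (if t = 1 then lin (a + c*p) (a - b + c*q) c
     else if t = 2 then lin (-a + b + c*p) (b + c*q) c else lin (-b + c*p) (-a + c*q) c)"
  using assms(2) by (auto simp: rtype_def hom_lin[OF assms(1)] assms(3) algebra_simps)


declare One_nat_def [simp del]

context
  fixes R :: "('k::field_char_0 mpoly \<Rightarrow> 'k mpoly) set" and G
  assumes reflR: "\<forall>r\<in>R. poisson_reflection r" and GR: "G = gen_group R"
    and GP: "G \<subseteq> PAut_gr" and fin: "finite G"
begin

lemma R_data: "r \<in> R \<Longrightarrow> \<exists>p q t. r (mvar X3) = lin p q 1 \<and> rtype r t"
  using refl_class reflR by blast

lemma G_PAut: "g \<in> G \<Longrightarrow> g \<in> PAut_gr" using GP by blast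

lemma R_G: "r \<in> R \<Longrightarrow> r \<in> G" using gen_group_base GR by blast
lemma Rinv_G: "r \<in> R \<Longrightarrow> inv_into UNIV r \<in> G" using gen_group_inv GR by blast

lemma R_e3:
  assumes "r \<in> R" "homogeneous 1 l"
  shows "Poly_Mapping.lookup (r l) (mn 0 0 1) = Poly_Mapping.lookup l (mn 0 0 1)"
proof -
  obtain p q t where d: "r (mvar X3) = lin p q 1" "rtype r t" using R_data[OF assms(1)] by blast
  have hom: "is_k_alg_hom r" using G_PAut[OF R_G[OF assms(1)]] by (rule PAut_hom)
  have l: "l = lin (Poly_Mapping.lookup l (mn 1 0 0)) (Poly_Mapping.lookup l (mn 0 1 0)) (Poly_Mapping.lookup l (mn 0 0 1))"
    using assms(2) by (rule homogeneous1_lin)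
  show ?thesis by (subst (1 2) l, subst rtype_apply[OF hom d(2) d(1)]) simp
qed

lemma G_e3:
  assumes "g \<in> G" "homogeneous 1 l"
  shows "Poly_Mapping.lookup (g l) (mn 0 0 1) = Poly_Mapping.lookup l (mn 0 0 1)"
proof -
  have "g \<in> gen_group R" using assms(1) GR by simp
  then show ?thesis using assms(2)
  proof (induction arbitrary: l rule: gen_group.induct)
    case gen_id then show ?case by simp
  next
    case (gen_mult s g)
    have "g \<in> G" using gen_mult.hyps(2) GR by simp
    then have "homogeneous 1 (g l)" using PAut_homog G_PAut gen_mult.prems by blast
    then show ?case using R_e3[OF gen_mult.hyps(1)] gen_mult.IH gen_mult.prems by simp
  next
    case (gen_inv s g)
    have "g \<in> G" using gen_inv.hyps(2) GR by simp
    then have h1: "homogeneous 1 (g l)" using PAut_homog G_PAut gen_inv.prems by blast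
    define l' where "l' = inv_into UNIV s (g l)"
    have "homogeneous 1 l'" unfolding l'_def using PAut_homog G_PAut Rinv_G[OF gen_inv.hyps(1)] h1 by blast
    moreover have "s l' = g l"
      unfolding l'_def using PAut_bij[OF G_PAut[OF R_G[OF gen_inv.hyps(1)]]]
      by (simp add: bij_is_surj f_inv_into_f)
    ultimately have "Poly_Mapping.lookup l' (mn 0 0 1) = Poly_Mapping.lookup (g l) (mn 0 0 1)"
      using R_e3[OF gen_inv.hyps(1)] by metis
    then show ?case using gen_inv.IH gen_inv.prems l'_def by simp
  qed
qed

definition Fx :: "'k mpoly" where "Fx = (\<Sum>g\<in>G. g (mvar X3))"

lemma G_closed: "h \<in> G \<Longrightarrow> g \<in> G \<Longrightarrow> h \<circ> g \<in> G"
  using gen_group_comp GR by blast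

lemma id_G: "id \<in> G" using GR gen_group.gen_id by blast

lemma F_inv:
  assumes "h \<in> G"
  shows "h Fx = Fx"
proof -
  have hom: "is_k_alg_hom h" using G_PAut[OF assms] by (rule PAut_hom)
  have inj: "inj h" using PAut_bij[OF G_PAut[OF assms]] by (rule bij_is_inj)
  have injo: "inj_on ((\<circ>) h) G"
  proof (rule inj_onI)
    fix x y assume "h \<circ> x = h \<circ> y"
    then show "x = y" using inj by (metis fun.inj_map inj_eq)
  qed
  have sub: "(\<circ>) h ` G \<subseteq> G" using G_closed[OF assms] by blast
  have eq: "(\<circ>) h ` G = G"
    using card_subset_eq[OF fin sub] card_image[OF injo] by simp
  have "h Fx = (\<Sum>g\<in>G. (h \<circ> g) (mvar X3))" by (simp add: Fx_def hom_sum[OF hom])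
  also have "\<dots> = (\<Sum>g\<in>(\<circ>) h ` G. g (mvar X3))"
    by (simp add: sum.reindex[OF injo])
  also have "\<dots> = Fx" by (simp add: eq Fx_def)
  finally show ?thesis .
qed

lemma F_homog: "homogeneous 1 Fx"
  unfolding Fx_def
  by (rule homogeneous_sum, rule PAut_homog[OF G_PAut]) (simp_all only: mvar_lin homogeneous_lin)

lemma F_e3: "Poly_Mapping.lookup Fx (mn 0 0 1) = of_nat (card G)"
proof -
  have "Poly_Mapping.lookup Fx (mn 0 0 1) = (\<Sum>g\<in>G. Poly_Mapping.lookup (g (mvar X3)) (mn 0 0 1))"
    by (simp add: Fx_def lookup_sum)
  also have "\<dots> = (\<Sum>g\<in>G. 1)"
  proof (rule sum.cong[OF refl])
    fix g assume "g \<in> G"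
    then show "Poly_Mapping.lookup (g (mvar X3)) (mn 0 0 1) = 1"
      using G_e3[of g "mvar X3"] by (simp only: mvar_lin homogeneous_lin lookup_lin)
  qed
  finally show ?thesis by simp
qed

lemma card_G: "of_nat (card G) \<noteq> (0::'k)"
  using fin id_G by (auto simp: card_gt_0_iff)

lemma F_lin: "Fx = lin (Poly_Mapping.lookup Fx (mn 1 0 0)) (Poly_Mapping.lookup Fx (mn 0 1 0)) (of_nat (card G))"
  using homogeneous1_lin[OF F_homog] F_e3 by simp

end


declare One_nat_def [simp del]

definition W0 :: "nat \<Rightarrow> 'k::comm_ring_1 mpoly" where
  "W0 t = (if t = 1 then lin 2 1 0 else if t = 2 then lin 1 2 0 else lin 1 (-1) 0)"

lemma rtype_t: "rtype r t \<Longrightarrow> t = 1 \<or> t = 2 \<or> t = 3"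
  by (auto simp: rtype_def)

lemma W0_fixed:
  fixes r :: "'k::comm_ring_1 mpoly \<Rightarrow> 'k mpoly"
  assumes "is_k_alg_hom r" "rtype r t" "r (mvar X3) = lin p q 1"
  shows "r (W0 t) = W0 t"
  using rtype_t[OF assms(2)] by (auto simp: W0_def rtype_apply[OF assms])

lemma fixed_cond:
  fixes r :: "'k::comm_ring_1 mpoly \<Rightarrow> 'k mpoly"
  assumes "is_k_alg_hom r" "rtype r t" "r (mvar X3) = lin p q 1" "r (lin a b 0) = lin a b 0"
  shows "(t = 1 \<and> a = 2*b) \<or> (t = 2 \<and> b = 2*a) \<or> (t = 3 \<and> a = -b)"
proof -
  have "(t = 1 \<and> a - b = b) \<or> (t = 2 \<and> -a + b = a) \<or> (t = 3 \<and> -b = a)"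
    using rtype_t[OF assms(2)] assms(4) by (auto simp: rtype_apply[OF assms(1-3)])
  then show ?thesis by (auto simp: algebra_simps mult_2)
qed

lemma fixed_W:
  fixes r :: "'k::comm_ring_1 mpoly \<Rightarrow> 'k mpoly"
  assumes "is_k_alg_hom r" "rtype r t" "r (mvar X3) = lin p q 1" "r (lin a b 0) = lin a b 0"
  shows "\<exists>s. lin a b 0 = mconst s * W0 t"
  using fixed_cond[OF assms]
proof (elim disjE conjE)
  assume "t = 1" "a = 2*b" then show ?thesis by (intro exI[of _ b]) (simp add: W0_def mult.commute)
next
  assume "t = 2" "b = 2*a" then show ?thesis by (intro exI[of _ a]) (simp add: W0_def mult.commute)
next
  assume "t = 3" "a = -b" then show ?thesis by (intro exI[of _ a]) (simp add: W0_def)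
qed

lemma fixed_two:
  fixes r :: "'k::field_char_0 mpoly \<Rightarrow> 'k mpoly"
  assumes "is_k_alg_hom r" "rtype r t" "r (mvar X3) = lin p q 1" "r (lin a b 0) = lin a b 0"
    and "is_k_alg_hom r'" "rtype r' t'" "r' (mvar X3) = lin p' q' 1" "r' (lin a b 0) = lin a b 0"
    and "t \<noteq> t'"
  shows "a = 0 \<and> b = 0"
  using fixed_cond[OF assms(1-4)] fixed_cond[OF assms(5-8)] assms(9)
  by auto

definition qq :: "'k::comm_ring_1 mpoly" where
  "qq = mvar X1 * mvar X1 + mvar X1 * mvar X2 + mvar X2 * mvar X2"

lemma lin_mvar: "lin a b c = mconst a * mvar X1 + mconst b * mvar X2 + mconst c * mvar X3"
  by (simp add: lin_def)

lemma qq_fixed: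
  fixes r :: "'k::comm_ring_1 mpoly \<Rightarrow> 'k mpoly"
  assumes "is_k_alg_hom r" "rtype r t"
  shows "r qq = qq"
proof -
  have "r qq = r (mvar X1) * r (mvar X1) + r (mvar X1) * r (mvar X2) + r (mvar X2) * r (mvar X2)"
    by (simp add: qq_def hom_add[OF assms(1)] hom_mult[OF assms(1)])
  then show ?thesis using assms(2)
    by (auto simp: rtype_def lin_mvar mconst_uminus qq_def algebra_simps)
qed

lemma qq_sgl: "qq = Poly_Mapping.single (mn 2 0 0) 1 + Poly_Mapping.single (mn 1 1 0) 1 + Poly_Mapping.single (mn 0 2 0) (1::'k::comm_ring_1)"
  by (simp add: qq_def mvar_mn mult_single numeral_2_eq_2 One_nat_def)

lemma pdiff_qq:
  "pdiff X1 qq = (lin 2 1 0 :: 'k::comm_ring_1 mpoly)"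
  "pdiff X2 qq = (lin 1 2 0 :: 'k::comm_ring_1 mpoly)"
  "pdiff X3 qq = (0 :: 'k::comm_ring_1 mpoly)"
  by (simp_all add: qq_sgl lin_sgl pdiff_add pdiff_single single_var_mn add.commute One_nat_def[symmetric])

lemma pbr_lin_qq: "pbr (lin f1 f2 n) qq = mconst n * (lin 2 1 0 * Q1) - mconst n * (lin 1 2 0 * Q2)"
  by (simp only: pbr_lin_left pdiff_qq) (simp add: algebra_simps del: lin_smult lin_uminus lin_diff lin_add)

lemma lookup_Q_more [simp]:
  "Poly_Mapping.lookup Q1 (mn 0 0 2) = 0" "Poly_Mapping.lookup Q1 (mn 1 0 1) = 0"
  "Poly_Mapping.lookup Q2 (mn 0 0 2) = 0" "Poly_Mapping.lookup Q2 (mn 1 0 1) = 0"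
  by (simp_all add: Q1_sgl Q2_sgl lookup_add lookup_single)

lemma lin_mult_lookup2 [simp]:
  "Poly_Mapping.lookup (lin a b c * lin a' b' c') (mn 0 0 2) = c * c'"
  "Poly_Mapping.lookup (lin a b c * lin a' b' c') (mn 1 0 1) = a * c' + c * a'"
  by (simp_all add: lin_sgl distrib_left distrib_right mult_single lookup_add lookup_single when_def)

lemma linQ_lookup:
  "Poly_Mapping.lookup (lin 2 1 0 * Q1) (mn 0 0 3) = (0::'k::comm_ring_1)"
  "Poly_Mapping.lookup (lin 2 1 0 * Q1) (mn 1 0 2) = (0::'k::comm_ring_1)"
  "Poly_Mapping.lookup (lin 2 1 0 * Q1) (mn 2 0 1) = (0::'k::comm_ring_1)"
  "Poly_Mapping.lookup (lin 2 1 0 * Q1) (mn 3 0 0) = (2::'k::comm_ring_1)"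
  "Poly_Mapping.lookup (lin 1 2 0 * Q2) (mn 0 0 3) = (0::'k::comm_ring_1)"
  "Poly_Mapping.lookup (lin 1 2 0 * Q2) (mn 1 0 2) = (0::'k::comm_ring_1)"
  "Poly_Mapping.lookup (lin 1 2 0 * Q2) (mn 2 0 1) = (0::'k::comm_ring_1)"
  "Poly_Mapping.lookup (lin 1 2 0 * Q2) (mn 3 0 0) = (0::'k::comm_ring_1)"
  by (simp_all add: lin_sgl Q1_sgl Q2_sgl distrib_left distrib_right mult_single lookup_add lookup_single when_def)

lemma ev0_mult: "Poly_Mapping.lookup (f * g) 0 = Poly_Mapping.lookup f 0 * Poly_Mapping.lookup (g :: 'k::comm_ring_1 mpoly) 0"
proof -
  have "Sum_any (\<lambda>q. Poly_Mapping.lookup g q when 0 = l + q) = (Poly_Mapping.lookup g 0 when l = 0)" for l :: "var \<Rightarrow>\<^sub>0 nat"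
  proof -
    have e: "(0 = l + q) \<longleftrightarrow> (l = 0 \<and> q = 0)" for q
      using mdeg_zero_iff[of "l+q"] mdeg_zero_iff[of l] mdeg_zero_iff[of q] by (auto simp: mdeg_add)
    have h: "(Poly_Mapping.lookup g q when 0 = l + q) = ((Poly_Mapping.lookup g 0 when l = 0) when q = 0)" for q
      by (auto simp: when_def e)
    show ?thesis by (simp only: h Sum_any_when_equal)
  qed
  then show ?thesis by (simp add: lookup_mult mult_when)
qed

lemma ev0_mvar: "Poly_Mapping.lookup (mvar v * f) 0 = (0::'k::comm_ring_1)"
proof -
  have "Poly_Mapping.single v (1::nat) \<noteq> 0" by (metis lookup_single_eq one_neq_zero lookup_zero)
  then show ?thesis by (simp add: ev0_mult mvar_def lookup_single when_def)
qed

lemma ev0_pbr: "Poly_Mapping.lookup (pbr f g) 0 = (0::'k::comm_ring_1)"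
  by (simp add: pbr_decomp lookup_add ev0_mvar)


declare One_nat_def [simp del]

lemma prod2:
  fixes a b X Y :: "'k::comm_ring_1 mpoly"
  assumes "Poly_Mapping.lookup a 0 = 0" "Poly_Mapping.lookup b 0 = 0"
    "hc 1 a = mconst s * X + mconst t * Y" "hc 1 b = mconst s' * X + mconst t' * Y" "mdeg m = 2"
  shows "Poly_Mapping.lookup (a*b) m = (s*s') * Poly_Mapping.lookup (X*X) m
     + (s*t' + t*s') * Poly_Mapping.lookup (X*Y) m + (t*t') * Poly_Mapping.lookup (Y*Y) m"
proof -
  have "Poly_Mapping.lookup (a*b) m = Poly_Mapping.lookup (hc 1 a * hc 1 b) m"
    using lookup_mult_deg2[OF assms(1,2,5)] .
  also have "hc 1 a * hc 1 b = mconst (s*s') * (X*X) + mconst (s*t' + t*s') * (X*Y) + mconst (t*t') * (Y*Y)"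
    unfolding assms(3,4) by (simp add: mconst_simps algebra_simps)
  finally show ?thesis by (simp add: lookup_add lookup_mconst_mult)
qed

lemma prod3:
  fixes a b X :: "'k::comm_ring_1 mpoly"
  assumes "Poly_Mapping.lookup a 0 = 0" "Poly_Mapping.lookup b 0 = 0"
    "hc 1 a = mconst s * X" "hc 1 b = mconst s' * X" "mdeg m = 3"
  shows "Poly_Mapping.lookup (a*b) m = Poly_Mapping.lookup (X * (mconst s * hc 2 b + mconst s' * hc 2 a)) m"
proof -
  have "Poly_Mapping.lookup (a*b) m = Poly_Mapping.lookup (hc 1 a * hc 2 b + hc 2 a * hc 1 b) m"
    using lookup_mult_deg3[OF assms(1,2,5)] .
  also have "hc 1 a * hc 2 b + hc 2 a * hc 1 b = X * (mconst s * hc 2 b + mconst s' * hc 2 a)"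
    unfolding assms(3,4) by (simp add: algebra_simps)
  finally show ?thesis .
qed

lemma lin_mult_H:
  fixes H :: "'k::comm_ring_1 mpoly"
  shows
  "Poly_Mapping.lookup (lin a b c * H) (mn 0 0 3) = c * Poly_Mapping.lookup H (mn 0 0 2)"
  "Poly_Mapping.lookup (lin a b c * H) (mn 1 0 2) = a * Poly_Mapping.lookup H (mn 0 0 2) + c * Poly_Mapping.lookup H (mn 1 0 1)"
  "Poly_Mapping.lookup (lin a b c * H) (mn 2 0 1) = a * Poly_Mapping.lookup H (mn 1 0 1) + c * Poly_Mapping.lookup H (mn 2 0 0)"
  "Poly_Mapping.lookup (lin a b c * H) (mn 3 0 0) = a * Poly_Mapping.lookup H (mn 2 0 0)"
  by (simp_all add: lin_sgl distrib_right lookup_add lookup_single_mult_mn One_nat_def[symmetric])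


lemma combo2:
  fixes X Y :: "'k::comm_ring_1 mpoly"
  assumes "\<forall>x\<in>{a1,b1,a2,b2,a3,b3}. Poly_Mapping.lookup x 0 = 0 \<and> (\<exists>s t. hc 1 x = mconst s * X + mconst t * Y)"
  shows "\<exists>A B C. \<forall>m. mdeg m = 2 \<longrightarrow> Poly_Mapping.lookup (a1*b1 + a2*b2 + a3*b3) m =
     A * Poly_Mapping.lookup (X*X) m + B * Poly_Mapping.lookup (X*Y) m + C * Poly_Mapping.lookup (Y*Y) m"
proof -
  from assms obtain s1 t1 s1' t1' s2 t2 s2' t2' s3 t3 s3' t3' where
    h: "hc 1 a1 = mconst s1 * X + mconst t1 * Y" "hc 1 b1 = mconst s1' * X + mconst t1' * Y"
       "hc 1 a2 = mconst s2 * X + mconst t2 * Y" "hc 1 b2 = mconst s2' * X + mconst t2' * Y"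
       "hc 1 a3 = mconst s3 * X + mconst t3 * Y" "hc 1 b3 = mconst s3' * X + mconst t3' * Y"
    by (auto simp: insert_iff)
  have z: "Poly_Mapping.lookup a1 0 = 0" "Poly_Mapping.lookup b1 0 = 0" "Poly_Mapping.lookup a2 0 = 0"
    "Poly_Mapping.lookup b2 0 = 0" "Poly_Mapping.lookup a3 0 = 0" "Poly_Mapping.lookup b3 0 = 0"
    using assms by auto
  show ?thesis
    apply (rule exI[of _ "s1*s1' + s2*s2' + s3*s3'"], rule exI[of _ "(s1*t1' + t1*s1') + (s2*t2' + t2*s2') + (s3*t3' + t3*s3')"],
        rule exI[of _ "t1*t1' + t2*t2' + t3*t3'"])
    apply (intro allI impI)
    apply (simp only: lookup_add prod2[OF z(1,2) h(1,2)] prod2[OF z(3,4) h(3,4)] prod2[OF z(5,6) h(5,6)])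
    apply (simp add: algebra_simps)
    done
qed

lemma combo3:
  fixes X :: "'k::comm_ring_1 mpoly"
  assumes "\<forall>x\<in>{a1,b1,a2,b2,a3,b3}. Poly_Mapping.lookup x 0 = 0 \<and> (\<exists>s. hc 1 x = mconst s * X)"
  shows "\<exists>H. \<forall>m. mdeg m = 3 \<longrightarrow> Poly_Mapping.lookup (a1*b1 + a2*b2 + a3*b3) m = Poly_Mapping.lookup (X * H) m"
proof -
  from assms obtain s1 s1' s2 s2' s3 s3' where
    h: "hc 1 a1 = mconst s1 * X" "hc 1 b1 = mconst s1' * X"
       "hc 1 a2 = mconst s2 * X" "hc 1 b2 = mconst s2' * X"
       "hc 1 a3 = mconst s3 * X" "hc 1 b3 = mconst s3' * X"
    by (auto simp: insert_iff)
  have z: "Poly_Mapping.lookup a1 0 = 0" "Poly_Mapping.lookup b1 0 = 0" "Poly_Mapping.lookup a2 0 = 0"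
    "Poly_Mapping.lookup b2 0 = 0" "Poly_Mapping.lookup a3 0 = 0" "Poly_Mapping.lookup b3 0 = 0"
    using assms by auto
  show ?thesis
    apply (rule exI[of _ "(mconst s1 * hc 2 b1 + mconst s1' * hc 2 a1) + (mconst s2 * hc 2 b2 + mconst s2' * hc 2 a2)
       + (mconst s3 * hc 2 b3 + mconst s3' * hc 2 a3)"])
    apply (intro allI impI)
    apply (simp only: lookup_add prod3[OF z(1,2) h(1,2)] prod3[OF z(3,4) h(3,4)] prod3[OF z(5,6) h(5,6)])
    apply (simp add: distrib_left lookup_add)
    done
qed


declare One_nat_def [simp del]

lemma no_iso:
  fixes R :: "('k::field_char_0 mpoly \<Rightarrow> 'k mpoly) set" and G
  assumes reflR: "\<forall>r\<in>R. poisson_reflection r" and GR: "G = gen_group R"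
    and GP: "G \<subseteq> PAut_gr" and fin: "finite G"
    and nt: "G \<noteq> {id}" and iso: "poisson_iso_to_subalg (invariants G)"
  shows False
proof -
  note ctx = reflR GR GP fin
  obtain \<psi> where bij: "bij_betw \<psi> UNIV (invariants G)" and hom: "is_k_alg_hom \<psi>"
    and br: "\<And>f g. \<psi> (pbr f g) = pbr (\<psi> f) (\<psi> g)"
    using iso unfolding poisson_iso_to_subalg_def by blast
  have inv: "\<psi> f \<in> invariants G" for f using bij by (auto simp: bij_betw_def)
  have surj: "\<exists>f. \<psi> f = h" if "h \<in> invariants G" for h
  proof -
    have "h \<in> range \<psi>" using bij that by (simp add: bij_betw_def)
    then show ?thesis by (metis rangeE)
  qed
  have invD: "g h = h" if "h \<in> invariants G" "g \<in> G" for h g using that by (simp add: invariants_def)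
  have "R \<noteq> {}"
  proof
    assume "R = {}"
    then have "G \<subseteq> {id}" using GR gen_group_empty by blast
    then show False using nt id_G[OF ctx] by blast
  qed
  then obtain r0 where r0: "r0 \<in> R" by blast
  obtain p0 q0 t0 where r0d: "r0 (mvar X3) = lin p0 q0 1" "rtype r0 t0" using R_data[OF ctx r0] by blast
  have hom0: "is_k_alg_hom r0" using G_PAut[OF ctx R_G[OF ctx r0]] by (rule PAut_hom)
  have homR: "is_k_alg_hom r" "bij r" if "r \<in> R" for r
    using G_PAut[OF ctx R_G[OF ctx that]] by (simp_all add: PAut_hom PAut_bij)
  define N :: 'k where "N = of_nat (card G)"
  define F where "F = Fx G"
  define f1 where "f1 = Poly_Mapping.lookup F (mn 1 0 0)"
  define f2 where "f2 = Poly_Mapping.lookup F (mn 0 1 0)"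
  have Flin: "F = lin f1 f2 N" using F_lin[OF ctx] by (simp add: F_def f1_def f2_def N_def)
  have N0: "N \<noteq> 0" using card_G[OF ctx] by (simp add: N_def)
  have Finv: "F \<in> invariants G" using F_inv[OF ctx] by (simp add: invariants_def F_def)
  define a1 where "a1 = Poly_Mapping.lookup (\<psi> (mvar X1)) 0"
  define a2 where "a2 = Poly_Mapping.lookup (\<psi> (mvar X2)) 0"
  have p23: "pbr (mvar X2) (mvar X3) = (Q2 :: 'k mpoly)" "pbr (mvar X3) (mvar X1) = (Q1 :: 'k mpoly)"
    by (simp_all add: mvar_lin pbr_lin_lin)
  have "Poly_Mapping.lookup (\<psi> Q1) 0 = 0" using br[of "mvar X3" "mvar X1"] ev0_pbr by (simp add: p23)
  moreover have "\<psi> Q1 = \<psi> (mvar X1) * \<psi> (mvar X1) + 2 * (\<psi> (mvar X1) * \<psi> (mvar X2))"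
    by (simp add: Q1_def hom_add[OF hom] hom_mult[OF hom] hom_numeral[OF hom] power2_eq_square mult.assoc)
  ultimately have h1: "a1*a1 + 2*(a1*a2) = 0"
    by (simp add: lookup_add ev0_mult lookup_numeral a1_def a2_def)
  have "Poly_Mapping.lookup (\<psi> Q2) 0 = 0" using br[of "mvar X2" "mvar X3"] ev0_pbr by (simp add: p23)
  moreover have "\<psi> Q2 = 2 * (\<psi> (mvar X1) * \<psi> (mvar X2)) + \<psi> (mvar X2) * \<psi> (mvar X2)"
    by (simp add: Q2_def hom_add[OF hom] hom_mult[OF hom] hom_numeral[OF hom] power2_eq_square mult.assoc)
  ultimately have h2: "2*(a1*a2) + a2*a2 = 0"
    by (simp add: lookup_add ev0_mult lookup_numeral a1_def a2_def)
  have a0: "a1 = 0 \<and> a2 = 0"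
  proof (cases "a1 = 0")
    case True then show ?thesis using h2 by simp
  next
    case False
    have "a1 * (a1 + 2*a2) = a1*a1 + 2*(a1*a2)" by (simp add: distrib_left mult.left_commute)
    then have "a1 + 2*a2 = 0" using h1 False by simp
    then have e: "a1 = -(2*a2)" by (simp add: eq_neg_iff_add_eq_0)
    have "2*(a1*a2) + a2*a2 = -(3*(a2*a2))" unfolding e by (simp add: algebra_simps)
    then have "a2 * a2 = 0" using h2 by simp
    then show ?thesis using e by simp
  qed
  have decomp: "\<exists>\<alpha>1 \<beta>1 \<alpha>2 \<beta>2 \<alpha>3 \<beta>3. pbr (\<psi> f) (\<psi> g) = \<alpha>1*\<beta>1 + \<alpha>2*\<beta>2 + \<alpha>3*\<beta>3 \<and>
      (\<forall>x\<in>{\<alpha>1,\<beta>1,\<alpha>2,\<beta>2,\<alpha>3,\<beta>3}. x \<in> invariants G \<and> Poly_Mapping.lookup x 0 = 0)" for f g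
  proof -
    define D1 where "D1 = pdiff X2 f * pdiff X3 g - pdiff X3 f * pdiff X2 g"
    define D2 where "D2 = pdiff X3 f * pdiff X1 g - pdiff X1 f * pdiff X3 g"
    have "pbr (\<psi> f) (\<psi> g) = \<psi> (pbr f g)" by (simp add: br)
    also have "\<dots> = \<psi> (mvar X1) * \<psi> (mvar X1 * D2) + \<psi> (mvar X1) * \<psi> (mvar X2 * (2 * (D1 + D2)))
       + \<psi> (mvar X2) * \<psi> (mvar X2 * D1)"
      unfolding pbr_decomp D1_def D2_def by (simp only: hom_add[OF hom] hom_mult[OF hom])
    finally have eq: "pbr (\<psi> f) (\<psi> g) = \<psi> (mvar X1) * \<psi> (mvar X1 * D2) + \<psi> (mvar X1) * \<psi> (mvar X2 * (2 * (D1 + D2)))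
       + \<psi> (mvar X2) * \<psi> (mvar X2 * D1)" .
    have z: "Poly_Mapping.lookup (\<psi> (mvar X1)) 0 = 0" "Poly_Mapping.lookup (\<psi> (mvar X2)) 0 = 0"
      using a0 by (simp_all add: a1_def a2_def)
    show ?thesis
      apply (rule exI, rule exI, rule exI, rule exI, rule exI, rule exI, rule conjI[OF eq])
      apply (simp only: insert_iff empty_iff ball_simps inv simp_thms z)
      apply (simp add: hom_mult[OF hom] ev0_mult z)
      done
  qed
  have hc_inv: "hc d h \<in> invariants G" if "h \<in> invariants G" for h d
    unfolding invariants_def
  proof (intro CollectI ballI)
    fix g assume "g \<in> G"
    then have "g (hc d h) = hc d (g h)" using PAut_hc[OF G_PAut[OF ctx]] by blast
    also have "g h = h" using that \<open>g \<in> G\<close> by (simp add: invariants_def)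
    finally show "g (hc d h) = hc d h" .
  qed
  have linv: "\<exists>c w1 w2. l = mconst c * F + lin w1 w2 0 \<and> (\<forall>r\<in>R. r (lin w1 w2 0) = lin w1 w2 0)"
    if "homogeneous 1 l" "l \<in> invariants G" for l
  proof -
    define l1 where "l1 = Poly_Mapping.lookup l (mn 1 0 0)"
    define l2 where "l2 = Poly_Mapping.lookup l (mn 0 1 0)"
    define l3 where "l3 = Poly_Mapping.lookup l (mn 0 0 1)"
    have l: "l = lin l1 l2 l3" using homogeneous1_lin[OF that(1)] by (simp add: l1_def l2_def l3_def)
    define c where "c = l3 / N"
    have "l - mconst c * F = lin (l1 - c*f1) (l2 - c*f2) 0"
      using N0 by (simp add: l Flin c_def)
    moreover have "r (l - mconst c * F) = l - mconst c * F" if "r \<in> R" for r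
      using homR[OF that] invD[OF \<open>l \<in> invariants G\<close> R_G[OF ctx that]] invD[OF Finv R_G[OF ctx that]]
      by (simp add: hom_diff hom_smult)
    ultimately show ?thesis by (intro exI[of _ c] exI[of _ "l1 - c*f1"] exI[of _ "l2 - c*f2"]) (auto simp: algebra_simps)
  qed
  show False
  proof (cases "\<forall>r\<in>R. rtype r t0")
    case True
    define w0 :: "'k mpoly" where "w0 = W0 t0"
    have w0R: "\<forall>r\<in>R. bij r \<and> r w0 = w0"
    proof
      fix r assume r: "r \<in> R"
      obtain p q t where d: "r (mvar X3) = lin p q 1" "rtype r t" using R_data[OF ctx r] by blast
      have "r w0 = w0" using W0_fixed[OF homR(1)[OF r] True[rule_format, OF r] d(1)] by (simp add: w0_def)
      then show "bij r \<and> r w0 = w0" using homR(2)[OF r] by simp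
    qed
    have w0inv: "w0 \<in> invariants G" using gen_group_invariant[OF w0R] GR by (auto simp: invariants_def)
    have VG: "\<exists>s t. l = mconst s * F + mconst t * w0" if hl: "homogeneous 1 l" and li: "l \<in> invariants G" for l
    proof -
      obtain c w1 w2 where l: "l = mconst c * F + lin w1 w2 0" and fx: "\<forall>r\<in>R. r (lin w1 w2 0) = lin w1 w2 0"
        using linv[OF hl li] by blast
      obtain s where "lin w1 w2 0 = mconst s * W0 t0"
        using fixed_W[OF hom0 r0d(2) r0d(1) fx[rule_format, OF r0]] by blast
      then show ?thesis using l by (auto simp: w0_def)
    qed
    obtain f where f: "\<psi> f = F" using surj[OF Finv] by blast
    obtain g where g: "\<psi> g = w0" using surj[OF w0inv] by blast
    obtain \<alpha>1 \<beta>1 \<alpha>2 \<beta>2 \<alpha>3 \<beta>3 where eq: "pbr F w0 = \<alpha>1*\<beta>1 + \<alpha>2*\<beta>2 + \<alpha>3*\<beta>3"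
      and P: "\<forall>x\<in>{\<alpha>1,\<beta>1,\<alpha>2,\<beta>2,\<alpha>3,\<beta>3}. x \<in> invariants G \<and> Poly_Mapping.lookup x 0 = 0"
      using decomp[of f g] unfolding f g by blast
    have "\<forall>x\<in>{\<alpha>1,\<beta>1,\<alpha>2,\<beta>2,\<alpha>3,\<beta>3}. Poly_Mapping.lookup x 0 = 0 \<and> (\<exists>s t. hc 1 x = mconst s * F + mconst t * w0)"
      using P VG homogeneous_hc hc_inv by blast
    from combo2[OF this] obtain A B C where ABC: "\<forall>m. mdeg m = 2 \<longrightarrow> Poly_Mapping.lookup (\<alpha>1*\<beta>1 + \<alpha>2*\<beta>2 + \<alpha>3*\<beta>3) m =
     A * Poly_Mapping.lookup (F*F) m + B * Poly_Mapping.lookup (F*w0) m + C * Poly_Mapping.lookup (w0*w0) m" by blast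
    obtain w1 w2 where w: "w0 = lin w1 w2 0" "w1 \<noteq> 0"
      and wt: "(w1 = 2 \<and> w2 = 1) \<or> (w1 = 1 \<and> w2 = 2) \<or> (w1 = 1 \<and> w2 = -1)"
      using rtype_t[OF r0d(2)] by (auto simp: w0_def W0_def)
    have pb: "pbr F w0 = mconst (f2*0 - N*w2) * Q2 + mconst (N*w1 - f1*0) * Q1"
      by (simp only: Flin w pbr_lin_lin)
    have L: "Poly_Mapping.lookup (pbr F w0) m = A * Poly_Mapping.lookup (F*F) m + B * Poly_Mapping.lookup (F*w0) m + C * Poly_Mapping.lookup (w0*w0) m"
      if "mdeg m = 2" for m
      using ABC that eq by simp
    have "A*(N*N) = 0" using L[of "mn 0 0 2"] by (simp add: Flin w pbr_lin_lin lookup_add lookup_mconst_mult)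
    then have A0: "A = 0" using N0 by simp
    have "B*(N*w1) = 0" using L[of "mn 1 0 1"] A0 by (simp add: Flin w pbr_lin_lin lookup_add lookup_mconst_mult)
    then have B0: "B = 0" using N0 w(2) by simp
    have e3: "C*(w1*w1) = N*w1" using L[of "mn 2 0 0"] A0 B0 by (simp add: Flin w pbr_lin_lin lookup_add lookup_mconst_mult)
    have e4: "C*(w1*w2 + w2*w1) = 2*(N*w1) - 2*(N*w2)" using L[of "mn 1 1 0"] A0 B0
      by (simp add: Flin w pbr_lin_lin lookup_add lookup_mconst_mult) (simp add: algebra_simps)
    have e5: "C*(w2*w2) = -(N*w2)" using L[of "mn 0 2 0"] A0 B0 by (simp add: Flin w pbr_lin_lin lookup_add lookup_mconst_mult)
    from wt show False
    proof (elim disjE conjE)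
      assume "w1 = 2" "w2 = 1"
      then have "C = -N" "C*4 = N*2" using e3 e5 by simp_all
      then have "N * 6 = 0" by simp
      then show False using N0 by simp
    next
      assume "w1 = 1" "w2 = 2"
      then have "C = N" "C*4 = -(N*2)" using e3 e5 by simp_all
      then have "N * 6 = 0" by simp
      then show False using N0 by simp
    next
      assume "w1 = 1" "w2 = -1"
      then have "C = N" "C*(-2) = 2*N + 2*N" using e3 e4 by (simp_all add: algebra_simps)
      then have "N * 6 = 0" by simp
      then show False using N0 by simp
    qed
  next
    case False
    then obtain r1 where r1: "r1 \<in> R" "\<not> rtype r1 t0" by blast
    obtain p1 q1 t1 where r1d: "r1 (mvar X3) = lin p1 q1 1" "rtype r1 t1" using R_data[OF ctx r1(1)] by blast
    have t01: "t0 \<noteq> t1" using r1 r1d by auto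
    have qqR: "\<forall>r\<in>R. bij r \<and> r qq = qq"
    proof
      fix r assume r: "r \<in> R"
      obtain p q t where d: "r (mvar X3) = lin p q 1" "rtype r t" using R_data[OF ctx r] by blast
      show "bij r \<and> r qq = qq" using qq_fixed[OF homR(1)[OF r] d(2)] homR(2)[OF r] by simp
    qed
    have qqinv: "qq \<in> invariants G" using gen_group_invariant[OF qqR] GR by (auto simp: invariants_def)
    have VG: "\<exists>s. l = mconst s * F" if hl: "homogeneous 1 l" and li: "l \<in> invariants G" for l
    proof -
      obtain c w1 w2 where l: "l = mconst c * F + lin w1 w2 0" and fx: "\<forall>r\<in>R. r (lin w1 w2 0) = lin w1 w2 0"
        using linv[OF hl li] by blast
      have "w1 = 0 \<and> w2 = 0"
        using fixed_two[OF hom0 r0d(2) r0d(1) fx[rule_format, OF r0] homR(1)[OF r1(1)] r1d(2) r1d(1) fx[rule_format, OF r1(1)] t01] .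
      then show ?thesis using l by auto
    qed
    obtain f where f: "\<psi> f = F" using surj[OF Finv] by blast
    obtain g where g: "\<psi> g = qq" using surj[OF qqinv] by blast
    obtain \<alpha>1 \<beta>1 \<alpha>2 \<beta>2 \<alpha>3 \<beta>3 where eq: "pbr F qq = \<alpha>1*\<beta>1 + \<alpha>2*\<beta>2 + \<alpha>3*\<beta>3"
      and P: "\<forall>x\<in>{\<alpha>1,\<beta>1,\<alpha>2,\<beta>2,\<alpha>3,\<beta>3}. x \<in> invariants G \<and> Poly_Mapping.lookup x 0 = 0"
      using decomp[of f g] unfolding f g by blast
    have "\<forall>x\<in>{\<alpha>1,\<beta>1,\<alpha>2,\<beta>2,\<alpha>3,\<beta>3}. Poly_Mapping.lookup x 0 = 0 \<and> (\<exists>s. hc 1 x = mconst s * F)"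
      using P VG homogeneous_hc hc_inv by blast
    from combo3[OF this] obtain H where HH: "\<forall>m. mdeg m = 3 \<longrightarrow> Poly_Mapping.lookup (\<alpha>1*\<beta>1 + \<alpha>2*\<beta>2 + \<alpha>3*\<beta>3) m =
      Poly_Mapping.lookup (F * H) m" by blast
    have pb: "pbr F qq = mconst N * (lin 2 1 0 * Q1) - mconst N * (lin 1 2 0 * Q2)"
      by (simp only: Flin pbr_lin_qq)
    have L: "Poly_Mapping.lookup (pbr F qq) m = Poly_Mapping.lookup (lin f1 f2 N * H) m" if "mdeg m = 3" for m
      using HH that eq Flin by simp
    have "N * Poly_Mapping.lookup H (mn 0 0 2) = 0"
      using L[of "mn 0 0 3"] by (simp add: pb lin_mult_H lookup_minus lookup_mconst_mult linQ_lookup)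
    then have h1: "Poly_Mapping.lookup H (mn 0 0 2) = 0" using N0 by simp
    have "N * Poly_Mapping.lookup H (mn 1 0 1) = 0"
      using L[of "mn 1 0 2"] h1 by (simp add: pb lin_mult_H lookup_minus lookup_mconst_mult linQ_lookup)
    then have h2: "Poly_Mapping.lookup H (mn 1 0 1) = 0" using N0 by simp
    have "N * Poly_Mapping.lookup H (mn 2 0 0) = 0"
      using L[of "mn 2 0 1"] h2 by (simp add: pb lin_mult_H lookup_minus lookup_mconst_mult linQ_lookup)
    then have h3: "Poly_Mapping.lookup H (mn 2 0 0) = 0" using N0 by simp
    have "N * 2 = 0"
      using L[of "mn 3 0 0"] h3 by (simp add: pb lin_mult_H lookup_minus lookup_mconst_mult linQ_lookup)
    then show False using N0 by simp
  qed
qed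


theorem lemma3p4p2:
  fixes G :: "('k::field_char_0 mpoly \<Rightarrow> 'k mpoly) set"
  assumes "alg_closed TYPE('k)"
    and "finite G"
    and "G \<subseteq> PAut_gr"
    and "\<exists>R. (\<forall>r\<in>R. poisson_reflection r) \<and> G = gen_group R"
    and "G \<noteq> {id}"
  shows "\<not> poisson_iso_to_subalg (invariants G)"
proof
  assume iso: "poisson_iso_to_subalg (invariants G)"
  obtain R where R: "\<forall>r\<in>R. poisson_reflection r" "G = gen_group R" using assms(4) by blast
  show False using no_iso[OF R(1) R(2) assms(3) assms(2) assms(5) iso] .
qed

end
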